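(* Let $\Gamma$ be an antipodal tight graph $\mathrm{AT}4(p,q,2)$ with vertex set $X$, and let $x\in X$. If $W$ is an irreducible $T(x)$-module with endpoint $2$, then $W$ has diameter $0$ and is thin.
   Context: For integers $p\ge 1$, $q\ge 2$, an $\mathrm{AT}4(p,q,2)$ is a non-bipartite distance-regular antipodal double cover of diameter $4$ with intersection array $\{q(pq+p+q),\,(q^2-1)(p+1),\,q(p+q)/2,\,1;\ 1,\,q(p+q)/2,\,(q^2-1)(p+1),\,q(pq+p+q)\}$; such a graph is tight and $Q$-polynomial. Let $A$ be the adjacency matrix, $\partial$ the distance, $V=\mathbb{C}^X$, and for $0\le i\le 4$ let $E^*_i(x)$ be the diagonal matrix with $(E^*_i(x))_{yy}=1$ if $\partial(x,y)=i$ and $0$ otherwise. $T(x)$ is the subalgebra of $\mathrm{Mat}_X(\mathbb{C})$ generated by $A,E^*_0(x),\dots,E^*_4(x)$. For an irreducible $T(x)$-module $W$ (a nonzero $T(x)$-invariant subspace of $V$ with no invariant subspaces other than $0,W$), its endpoint is $\min\{i:E^*_i(x)W\neq0\}$, its diameter is $|\{i:E^*_i(x)W\ne 0\}|-1$, and $W$ is thin if $\dim E^*_i(x)W\le1$ for all $i$. *)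

theory Defs
  imports Complex_Main
begin

definition simple_graph :: "'a set \<Rightarrow> ('a \<Rightarrow> 'a \<Rightarrow> bool) \<Rightarrow> bool" where
  "simple_graph X Adj \<longleftrightarrow> finite X \<and> X \<noteq> {} \<and>
     (\<forall>y z. Adj y z \<longrightarrow> y \<in> X \<and> z \<in> X) \<and>
     (\<forall>y z. Adj y z \<longrightarrow> Adj z y) \<and> (\<forall>y. \<not> Adj y y)"

inductive walk :: "'a set \<Rightarrow> ('a \<Rightarrow> 'a \<Rightarrow> bool) \<Rightarrow> nat \<Rightarrow> 'a \<Rightarrow> 'a \<Rightarrow> bool"
  for X Adj where
  walk0: "x \<in> X \<Longrightarrow> walk X Adj 0 x x"
| walkS: "walk X Adj n x y \<Longrightarrow> Adj y z \<Longrightarrow> z \<in> X \<Longrightarrow> walk X Adj (Suc n) x z"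

definition gdist :: "'a set \<Rightarrow> ('a \<Rightarrow> 'a \<Rightarrow> bool) \<Rightarrow> 'a \<Rightarrow> 'a \<Rightarrow> nat" where
  "gdist X Adj x y = (LEAST n. walk X Adj n x y)"

definition connected_graph :: "'a set \<Rightarrow> ('a \<Rightarrow> 'a \<Rightarrow> bool) \<Rightarrow> bool" where
  "connected_graph X Adj \<longleftrightarrow> (\<forall>x\<in>X. \<forall>y\<in>X. \<exists>n. walk X Adj n x y)"

definition graph_diameter :: "'a set \<Rightarrow> ('a \<Rightarrow> 'a \<Rightarrow> bool) \<Rightarrow> nat \<Rightarrow> bool" where
  "graph_diameter X Adj D \<longleftrightarrow> (\<forall>x\<in>X. \<forall>y\<in>X. gdist X Adj x y \<le> D) \<and>
     (\<exists>x\<in>X. \<exists>y\<in>X. gdist X Adj x y = D)"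

definition distance_regular ::
  "'a set \<Rightarrow> ('a \<Rightarrow> 'a \<Rightarrow> bool) \<Rightarrow> nat \<Rightarrow> (nat \<Rightarrow> nat) \<Rightarrow> (nat \<Rightarrow> nat) \<Rightarrow> bool" where
  "distance_regular X Adj D b c \<longleftrightarrow>
     simple_graph X Adj \<and> connected_graph X Adj \<and> graph_diameter X Adj D \<and>
     (\<forall>x\<in>X. \<forall>y\<in>X.
        (1 \<le> gdist X Adj x y \<longrightarrow>
           card {z\<in>X. Adj y z \<and> gdist X Adj x z = gdist X Adj x y - 1} = c (gdist X Adj x y)) \<and>
        (gdist X Adj x y < D \<longrightarrow>
           card {z\<in>X. Adj y z \<and> gdist X Adj x z = gdist X Adj x y + 1} = b (gdist X Adj x y)))"

definition bipartite :: "'a set \<Rightarrow> ('a \<Rightarrow> 'a \<Rightarrow> bool) \<Rightarrow> bool" where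
  "bipartite X Adj \<longleftrightarrow> (\<exists>S. \<forall>y\<in>X. \<forall>z\<in>X. Adj y z \<longrightarrow> (y \<in> S \<longleftrightarrow> z \<notin> S))"

text \<open>Antipodal: being at distance D (the diameter) or equal is an equivalence
relation. Double cover: every antipodal class has size 2.\<close>

definition antipodal :: "'a set \<Rightarrow> ('a \<Rightarrow> 'a \<Rightarrow> bool) \<Rightarrow> nat \<Rightarrow> bool" where
  "antipodal X Adj D \<longleftrightarrow> (\<forall>x\<in>X. \<forall>y\<in>X. \<forall>z\<in>X.
      gdist X Adj x y = D \<and> gdist X Adj x z = D \<and> y \<noteq> z \<longrightarrow> gdist X Adj y z = D)"

definition antipodal_double_cover :: "'a set \<Rightarrow> ('a \<Rightarrow> 'a \<Rightarrow> bool) \<Rightarrow> nat \<Rightarrow> bool" where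
  "antipodal_double_cover X Adj D \<longleftrightarrow> antipodal X Adj D \<and>
     (\<forall>x\<in>X. card {y\<in>X. gdist X Adj x y = D} = 1)"

text \<open>AT4(p,q,2): intersection array
 {q(pq+p+q), (q^2-1)(p+1), q(p+q)/2, 1; 1, q(p+q)/2, (q^2-1)(p+1), q(pq+p+q)}.
The entries q(p+q)/2 are encoded as 2 * b_2 = q(p+q), 2 * c_2 = q(p+q).\<close>

definition AT4 :: "'a set \<Rightarrow> ('a \<Rightarrow> 'a \<Rightarrow> bool) \<Rightarrow> nat \<Rightarrow> nat \<Rightarrow> bool" where
  "AT4 X Adj p q \<longleftrightarrow> 1 \<le> p \<and> 2 \<le> q \<and> \<not> bipartite X Adj \<and> antipodal_double_cover X Adj 4 \<and>
     (\<exists>b c. distance_regular X Adj 4 b c \<and>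
        b 0 = q * (p*q + p + q) \<and> b 1 = (q^2 - 1) * (p + 1) \<and> 2 * b 2 = q * (p + q) \<and> b 3 = 1 \<and>
        c 1 = 1 \<and> 2 * c 2 = q * (p + q) \<and> c 3 = (q^2 - 1) * (p + 1) \<and> c 4 = q * (p*q + p + q))"

type_synonym 'a mat = "'a \<Rightarrow> 'a \<Rightarrow> complex"
type_synonym 'a vec = "'a \<Rightarrow> complex"

text \<open>V = C^X: vectors vanishing outside X.\<close>
definition Vsp :: "'a set \<Rightarrow> 'a vec set" where
  "Vsp X = {f. \<forall>y. y \<notin> X \<longrightarrow> f y = 0}"

definition mat_mult :: "'a set \<Rightarrow> 'a mat \<Rightarrow> 'a mat \<Rightarrow> 'a mat" where
  "mat_mult X M N = (\<lambda>y z. \<Sum>w\<in>X. M y w * N w z)"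

definition mat_vec :: "'a set \<Rightarrow> 'a mat \<Rightarrow> 'a vec \<Rightarrow> 'a vec" where
  "mat_vec X M f = (\<lambda>y. \<Sum>z\<in>X. M y z * f z)"

definition adj_mat :: "'a set \<Rightarrow> ('a \<Rightarrow> 'a \<Rightarrow> bool) \<Rightarrow> 'a mat" where
  "adj_mat X Adj = (\<lambda>y z. if y \<in> X \<and> z \<in> X \<and> Adj y z then 1 else 0)"

definition dual_idem :: "'a set \<Rightarrow> ('a \<Rightarrow> 'a \<Rightarrow> bool) \<Rightarrow> 'a \<Rightarrow> nat \<Rightarrow> 'a mat" where
  "dual_idem X Adj x i = (\<lambda>y z. if y = z \<and> y \<in> X \<and> gdist X Adj x y = i then 1 else 0)"

inductive_set Talg :: "'a set \<Rightarrow> ('a \<Rightarrow> 'a \<Rightarrow> bool) \<Rightarrow> 'a \<Rightarrow> 'a mat set"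
  for X Adj x where
  gen_A: "adj_mat X Adj \<in> Talg X Adj x"
| gen_E: "i \<le> 4 \<Longrightarrow> dual_idem X Adj x i \<in> Talg X Adj x"
| add: "M \<in> Talg X Adj x \<Longrightarrow> N \<in> Talg X Adj x \<Longrightarrow> (\<lambda>y z. M y z + N y z) \<in> Talg X Adj x"
| smult: "M \<in> Talg X Adj x \<Longrightarrow> (\<lambda>y z. a * M y z) \<in> Talg X Adj x"
| mult: "M \<in> Talg X Adj x \<Longrightarrow> N \<in> Talg X Adj x \<Longrightarrow> mat_mult X M N \<in> Talg X Adj x"

definition csubspace_of :: "'a set \<Rightarrow> 'a vec set \<Rightarrow> bool" where
  "csubspace_of X W \<longleftrightarrow> W \<subseteq> Vsp X \<and> (\<lambda>_. 0) \<in> W \<and>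
     (\<forall>u\<in>W. \<forall>v\<in>W. (\<lambda>y. u y + v y) \<in> W) \<and> (\<forall>a. \<forall>u\<in>W. (\<lambda>y. a * u y) \<in> W)"

definition T_module :: "'a set \<Rightarrow> ('a \<Rightarrow> 'a \<Rightarrow> bool) \<Rightarrow> 'a \<Rightarrow> 'a vec set \<Rightarrow> bool" where
  "T_module X Adj x W \<longleftrightarrow> csubspace_of X W \<and>
     (\<forall>M\<in>Talg X Adj x. \<forall>w\<in>W. mat_vec X M w \<in> W)"

definition irreducible_T_module :: "'a set \<Rightarrow> ('a \<Rightarrow> 'a \<Rightarrow> bool) \<Rightarrow> 'a \<Rightarrow> 'a vec set \<Rightarrow> bool" where
  "irreducible_T_module X Adj x W \<longleftrightarrow> T_module X Adj x W \<and> W \<noteq> {\<lambda>_. 0} \<and>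
     (\<forall>U. T_module X Adj x U \<and> U \<subseteq> W \<longrightarrow> U = {\<lambda>_. 0} \<or> U = W)"

definition EW :: "'a set \<Rightarrow> ('a \<Rightarrow> 'a \<Rightarrow> bool) \<Rightarrow> 'a \<Rightarrow> nat \<Rightarrow> 'a vec set \<Rightarrow> 'a vec set" where
  "EW X Adj x i W = mat_vec X (dual_idem X Adj x i) ` W"

definition support_idx :: "'a set \<Rightarrow> ('a \<Rightarrow> 'a \<Rightarrow> bool) \<Rightarrow> 'a \<Rightarrow> 'a vec set \<Rightarrow> nat set" where
  "support_idx X Adj x W = {i. i \<le> 4 \<and> EW X Adj x i W \<noteq> {\<lambda>_. 0}}"

definition endpoint :: "'a set \<Rightarrow> ('a \<Rightarrow> 'a \<Rightarrow> bool) \<Rightarrow> 'a \<Rightarrow> 'a vec set \<Rightarrow> nat" where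
  "endpoint X Adj x W = Min (support_idx X Adj x W)"

definition module_diameter :: "'a set \<Rightarrow> ('a \<Rightarrow> 'a \<Rightarrow> bool) \<Rightarrow> 'a \<Rightarrow> 'a vec set \<Rightarrow> nat" where
  "module_diameter X Adj x W = card (support_idx X Adj x W) - 1"

definition dim_le_1 :: "'a vec set \<Rightarrow> bool" where
  "dim_le_1 S \<longleftrightarrow> (\<exists>v. \<forall>w\<in>S. \<exists>a. w = (\<lambda>y. a * v y))"

definition thin :: "'a set \<Rightarrow> ('a \<Rightarrow> 'a \<Rightarrow> bool) \<Rightarrow> 'a \<Rightarrow> 'a vec set \<Rightarrow> bool" where
  "thin X Adj x W \<longleftrightarrow> (\<forall>i. dim_le_1 (EW X Adj x i W))"

end

theory Submission
  imports Defs
begin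

lemma sum_fiber_gen:
  assumes "finite A" "\<forall>m\<in>A. h m \<le> (n::nat)"
  shows "(\<Sum>m\<in>A. g m) = (\<Sum>i\<le>n. \<Sum>m\<in>{m\<in>A. h m = i}. g m)"
proof -
  have "h ` A \<subseteq> {..n}" using assms(2) by auto
  then show ?thesis using sum.group[of A "{..n}" h g] assms(1) by simp
qed

lemma sum_fiber:
  fixes f :: "nat \<Rightarrow> 'b::comm_ring_1"
  assumes "finite A" "\<forall>m\<in>A. h m \<le> (n::nat)"
  shows "(\<Sum>m\<in>A. f (h m)) = (\<Sum>i\<le>n. of_nat (card {m\<in>A. h m = i}) * f i)"
proof -
  have "(\<Sum>m\<in>A. f (h m)) = (\<Sum>i\<le>n. \<Sum>m\<in>{m\<in>A. h m = i}. f (h m))"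
    by (rule sum_fiber_gen[OF assms])
  also have "\<dots> = (\<Sum>i\<le>n. \<Sum>m\<in>{m\<in>A. h m = i}. f i)"
    by (intro sum.cong) auto
  also have "\<dots> = (\<Sum>i\<le>n. of_nat (card {m\<in>A. h m = i}) * f i)"
    by simp
  finally show ?thesis .
qed

lemma inner_lemma:
  fixes F :: "'a \<Rightarrow> 'a \<Rightarrow> real"
  assumes fX: "finite X" and NX: "N \<subseteq> X" and K: "K = real (card N)" "K \<noteq> 0"
    and Fs: "\<And>u v. u \<in> X \<Longrightarrow> v \<in> X \<Longrightarrow> F u v = F v u"
    and Fq: "\<And>u v. u \<in> X \<Longrightarrow> v \<in> X \<Longrightarrow> (\<Sum>m\<in>X. F u m * F m v) = cf * F u v"
    and Fr: "\<And>w. w \<in> N \<Longrightarrow> (\<Sum>m\<in>N. F w m) = \<rho>"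
    and w: "w \<in> N" and w': "w' \<in> N"
  shows "(\<Sum>u\<in>X. (F u w - (\<Sum>m\<in>N. F u m) / K) * (F u w' - (\<Sum>m\<in>N. F u m) / K)) = cf * (F w w' - \<rho> / K)"
proof -
  have fN: "finite N" using fX NX finite_subset by auto
  have wX: "w \<in> X" and w'X: "w' \<in> X" using w w' NX by auto
  define s where "s u = (\<Sum>m\<in>N. F u m)" for u
  have a: "(\<Sum>u\<in>X. F u w * F u w') = cf * F w w'"
    using Fq[OF wX w'X] Fs wX by (metis (no_types, lifting) sum.cong)
  have b: "(\<Sum>u\<in>X. F u w * s u) = cf * \<rho>"
  proof -
    have "(\<Sum>u\<in>X. F u w * s u) = (\<Sum>u\<in>X. \<Sum>m\<in>N. F w u * F u m)"
      unfolding s_def using Fs wX by (intro sum.cong) (auto simp: sum_distrib_left)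
    also have "\<dots> = (\<Sum>m\<in>N. \<Sum>u\<in>X. F w u * F u m)" by (rule sum.swap)
    also have "\<dots> = (\<Sum>m\<in>N. cf * F w m)" using Fq wX NX by (intro sum.cong) auto
    also have "\<dots> = cf * \<rho>" using Fr[OF w] by (simp add: sum_distrib_left[symmetric])
    finally show ?thesis .
  qed
  have c: "(\<Sum>u\<in>X. s u * F u w') = cf * \<rho>"
  proof -
    have "(\<Sum>u\<in>X. s u * F u w') = (\<Sum>u\<in>X. \<Sum>m\<in>N. F m u * F u w')"
    proof (intro sum.cong refl)
      fix u assume uX: "u \<in> X"
      have "s u * F u w' = (\<Sum>m\<in>N. F u m * F u w')" unfolding s_def by (simp add: sum_distrib_right)
      also have "\<dots> = (\<Sum>m\<in>N. F m u * F u w')" using Fs uX NX by (intro sum.cong refl) auto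
      finally show "s u * F u w' = (\<Sum>m\<in>N. F m u * F u w')" .
    qed
    also have "\<dots> = (\<Sum>m\<in>N. \<Sum>u\<in>X. F m u * F u w')" by (rule sum.swap)
    also have "\<dots> = (\<Sum>m\<in>N. cf * F w' m)"
    proof (intro sum.cong refl)
      fix m assume "m \<in> N"
      then have mX: "m \<in> X" using NX by auto
      have "(\<Sum>u\<in>X. F m u * F u w') = cf * F m w'" by (rule Fq[OF mX w'X])
      then show "(\<Sum>u\<in>X. F m u * F u w') = cf * F w' m" using Fs[OF mX w'X] by simp
    qed
    also have "\<dots> = cf * \<rho>" using Fr[OF w'] by (simp add: sum_distrib_left[symmetric])
    finally show ?thesis .
  qed
  have dd: "(\<Sum>u\<in>X. s u * s u) = cf * K * \<rho>"
  proof -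
    have "(\<Sum>u\<in>X. s u * s u) = (\<Sum>u\<in>X. \<Sum>m\<in>N. \<Sum>m'\<in>N. F m u * F u m')"
    proof (intro sum.cong refl)
      fix u assume uX: "u \<in> X"
      have "s u * s u = (\<Sum>m\<in>N. \<Sum>m'\<in>N. F u m * F u m')" unfolding s_def by (simp add: sum_product)
      also have "\<dots> = (\<Sum>m\<in>N. \<Sum>m'\<in>N. F m u * F u m')" using Fs uX NX by (intro sum.cong refl) auto
      finally show "s u * s u = (\<Sum>m\<in>N. \<Sum>m'\<in>N. F m u * F u m')" .
    qed
    also have "\<dots> = (\<Sum>m\<in>N. \<Sum>u\<in>X. \<Sum>m'\<in>N. F m u * F u m')" by (rule sum.swap)
    also have "\<dots> = (\<Sum>m\<in>N. \<Sum>m'\<in>N. \<Sum>u\<in>X. F m u * F u m')" by (intro sum.cong refl sum.swap)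
    also have "\<dots> = (\<Sum>m\<in>N. \<Sum>m'\<in>N. cf * F m m')" using Fq NX by (intro sum.cong refl) auto
    also have "\<dots> = (\<Sum>m\<in>N. cf * \<rho>)" using Fr by (intro sum.cong refl) (simp add: sum_distrib_left[symmetric])
    also have "\<dots> = cf * K * \<rho>" using K by simp
    finally show ?thesis .
  qed
  have "(\<Sum>u\<in>X. (F u w - s u / K) * (F u w' - s u / K)) =
      (\<Sum>u\<in>X. F u w * F u w') - (\<Sum>u\<in>X. F u w * s u) / K - (\<Sum>u\<in>X. s u * F u w') / K
      + (\<Sum>u\<in>X. s u * s u) / (K * K)"
    by (simp add: algebra_simps sum.distrib sum_subtractf sum_divide_distrib)
  also have "\<dots> = cf * (F w w' - \<rho> / K)"
    unfolding a b c dd using K(2) by (simp add: field_simps)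
  finally show ?thesis unfolding s_def .
qed

lemma K_arg:
  fixes F G :: "'a \<Rightarrow> 'a \<Rightarrow> real"
  assumes fX: "finite X" and NX: "N \<subseteq> X" and K: "K = real (card N)" "K \<noteq> 0"
    and Fs: "\<And>u v. u \<in> X \<Longrightarrow> v \<in> X \<Longrightarrow> F u v = F v u"
    and Gs: "\<And>u v. u \<in> X \<Longrightarrow> v \<in> X \<Longrightarrow> G u v = G v u"
    and Fq: "\<And>u v. u \<in> X \<Longrightarrow> v \<in> X \<Longrightarrow> (\<Sum>m\<in>X. F u m * F m v) = cf * F u v"
    and Gq: "\<And>u v. u \<in> X \<Longrightarrow> v \<in> X \<Longrightarrow> (\<Sum>m\<in>X. G u m * G m v) = cg * G u v"
    and Fr: "\<And>w. w \<in> N \<Longrightarrow> (\<Sum>m\<in>N. F w m) = \<rho>"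
    and Gr: "\<And>w. w \<in> N \<Longrightarrow> (\<Sum>m\<in>N. G w m) = \<rho>'"
    and tr: "(\<Sum>w\<in>N. \<Sum>w'\<in>N. (F w w' - \<rho> / K) * (G w w' - \<rho>' / K)) = 0"
    and cf: "cf \<noteq> 0" and cg: "cg \<noteq> 0"
    and w1: "w1 \<in> N" and w2: "w2 \<in> N"
  shows "(\<Sum>w\<in>N. (F w1 w - \<rho> / K) * (G w w2 - \<rho>' / K)) = 0"
proof -
  have fN: "finite N" using fX NX finite_subset by auto
  define f where "f w u = F u w - (\<Sum>m\<in>N. F u m) / K" for w u
  define g where "g w u = G u w - (\<Sum>m\<in>N. G u m) / K" for w u
  have fi: "(\<Sum>u\<in>X. f w u * f w' u) = cf * (F w w' - \<rho> / K)" if "w \<in> N" "w' \<in> N" for w w'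
    unfolding f_def by (rule inner_lemma[OF fX NX K Fs Fq Fr that])
  have gi: "(\<Sum>u\<in>X. g w u * g w' u) = cg * (G w w' - \<rho>' / K)" if "w \<in> N" "w' \<in> N" for w w'
    unfolding g_def by (rule inner_lemma[OF fX NX K Gs Gq Gr that])
  define T where "T u v w w' = f w u * g w v * (f w' u * g w' v)" for u v w w'
  have "(\<Sum>u\<in>X. \<Sum>v\<in>X. (\<Sum>w\<in>N. f w u * g w v)^2) = (\<Sum>u\<in>X. \<Sum>v\<in>X. \<Sum>w\<in>N. \<Sum>w'\<in>N. T u v w w')"
    unfolding T_def by (simp add: power2_eq_square sum_product)
  also have "\<dots> = (\<Sum>u\<in>X. \<Sum>w\<in>N. \<Sum>v\<in>X. \<Sum>w'\<in>N. T u v w w')"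
    by (intro sum.cong refl sum.swap)
  also have "\<dots> = (\<Sum>u\<in>X. \<Sum>w\<in>N. \<Sum>w'\<in>N. \<Sum>v\<in>X. T u v w w')"
    by (intro sum.cong refl sum.swap)
  also have "\<dots> = (\<Sum>w\<in>N. \<Sum>u\<in>X. \<Sum>w'\<in>N. \<Sum>v\<in>X. T u v w w')"
    by (rule sum.swap)
  also have "\<dots> = (\<Sum>w\<in>N. \<Sum>w'\<in>N. \<Sum>u\<in>X. \<Sum>v\<in>X. T u v w w')"
    by (intro sum.cong refl sum.swap)
  also have "\<dots> = (\<Sum>w\<in>N. \<Sum>w'\<in>N. (\<Sum>u\<in>X. f w u * f w' u) * (\<Sum>v\<in>X. g w v * g w' v))"
    unfolding T_def by (intro sum.cong refl) (simp add: sum_product algebra_simps)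
  also have "\<dots> = (\<Sum>w\<in>N. \<Sum>w'\<in>N. cf * cg * ((F w w' - \<rho> / K) * (G w w' - \<rho>' / K)))"
    using fi gi by (intro sum.cong refl) auto
  also have "\<dots> = cf * cg * (\<Sum>w\<in>N. \<Sum>w'\<in>N. (F w w' - \<rho> / K) * (G w w' - \<rho>' / K))"
    by (simp add: sum_distrib_left)
  also have "\<dots> = 0" using tr by simp
  finally have sq0: "(\<Sum>u\<in>X. \<Sum>v\<in>X. (\<Sum>w\<in>N. f w u * g w v)^2) = 0" .
  have z: "(\<Sum>w\<in>N. f w u * g w v) = 0" if "u \<in> X" "v \<in> X" for u v
  proof -
    have nn: "\<And>u. u \<in> X \<Longrightarrow> 0 \<le> (\<Sum>v\<in>X. (\<Sum>w\<in>N. f w u * g w v)^2)"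
      by (simp add: sum_nonneg)
    have "\<forall>u\<in>X. (\<Sum>v\<in>X. (\<Sum>w\<in>N. f w u * g w v)^2) = 0"
      using sum_nonneg_eq_0_iff[OF fX, of "\<lambda>u. (\<Sum>v\<in>X. (\<Sum>w\<in>N. f w u * g w v)^2)"] nn sq0 by blast
    then have "(\<Sum>v\<in>X. (\<Sum>w\<in>N. f w u * g w v)^2) = 0" using that by auto
    then have "(\<Sum>w\<in>N. f w u * g w v)^2 = 0"
      using sum_nonneg_eq_0_iff[OF fX, of "\<lambda>v. (\<Sum>w\<in>N. f w u * g w v)^2"] that by simp
    then show ?thesis by simp
  qed
  have "(\<Sum>w\<in>N. (cf * (F w1 w - \<rho> / K)) * (cg * (G w w2 - \<rho>' / K))) =
      (\<Sum>w\<in>N. (\<Sum>u\<in>X. f w1 u * f w u) * (\<Sum>v\<in>X. g w v * g w2 v))"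
    using fi gi w1 w2 by (intro sum.cong refl) auto
  also have "\<dots> = (\<Sum>w\<in>N. \<Sum>u\<in>X. \<Sum>v\<in>X. f w1 u * g w2 v * (f w u * g w v))"
    by (intro sum.cong refl) (simp add: sum_product algebra_simps)
  also have "\<dots> = (\<Sum>u\<in>X. \<Sum>w\<in>N. \<Sum>v\<in>X. f w1 u * g w2 v * (f w u * g w v))"
    by (rule sum.swap)
  also have "\<dots> = (\<Sum>u\<in>X. \<Sum>v\<in>X. \<Sum>w\<in>N. f w1 u * g w2 v * (f w u * g w v))"
    by (intro sum.cong refl sum.swap)
  also have "\<dots> = (\<Sum>u\<in>X. \<Sum>v\<in>X. f w1 u * g w2 v * (\<Sum>w\<in>N. f w u * g w v))"
    by (simp add: sum_distrib_left)
  also have "\<dots> = 0" using z by simp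
  finally have "cf * cg * (\<Sum>w\<in>N. (F w1 w - \<rho> / K) * (G w w2 - \<rho>' / K)) = 0"
    by (simp add: sum_distrib_left algebra_simps)
  then show ?thesis using cf cg by simp
qed

locale at4g =
  fixes X :: "'a set" and Adj :: "'a \<Rightarrow> 'a \<Rightarrow> bool" and p q :: nat and b c :: "nat \<Rightarrow> nat"
  assumes p1: "1 \<le> p" and q2: "2 \<le> q"
    and dr: "distance_regular X Adj 4 b c"
    and adc: "antipodal_double_cover X Adj 4"
    and b0: "b 0 = q * (p*q + p + q)" and b1: "b 1 = (q^2 - 1) * (p + 1)"
    and b2: "2 * b 2 = q * (p + q)" and b3: "b 3 = 1"
    and c1: "c 1 = 1" and c2: "2 * c 2 = q * (p + q)" and c3: "c 3 = (q^2 - 1) * (p + 1)"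
    and c4: "c 4 = q * (p*q + p + q)"
begin

abbreviation d where "d \<equiv> gdist X Adj"

lemma sg: "simple_graph X Adj" using dr unfolding distance_regular_def by auto
lemma finX: "finite X" using sg unfolding simple_graph_def by auto
lemma Xne: "X \<noteq> {}" using sg unfolding simple_graph_def by auto
lemma adjX: "Adj y z \<Longrightarrow> y \<in> X \<and> z \<in> X" using sg unfolding simple_graph_def by auto
lemma adj_sym: "Adj y z \<Longrightarrow> Adj z y" using sg unfolding simple_graph_def by auto
lemma adj_irr: "\<not> Adj y y" using sg unfolding simple_graph_def by auto
lemma conn: "x \<in> X \<Longrightarrow> y \<in> X \<Longrightarrow> \<exists>n. walk X Adj n x y"
  using dr unfolding distance_regular_def connected_graph_def by auto
lemma diam: "x \<in> X \<Longrightarrow> y \<in> X \<Longrightarrow> d x y \<le> 4"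
  using dr unfolding distance_regular_def graph_diameter_def by auto
lemma cnt_c: "x \<in> X \<Longrightarrow> y \<in> X \<Longrightarrow> 1 \<le> d x y \<Longrightarrow>
   card {z\<in>X. Adj y z \<and> d x z = d x y - 1} = c (d x y)"
  using dr unfolding distance_regular_def by auto
lemma cnt_b: "x \<in> X \<Longrightarrow> y \<in> X \<Longrightarrow> d x y < 4 \<Longrightarrow>
   card {z\<in>X. Adj y z \<and> d x z = d x y + 1} = b (d x y)"
  using dr unfolding distance_regular_def by auto

lemma walk_in: "walk X Adj n x y \<Longrightarrow> x \<in> X \<and> y \<in> X"
  by (induction rule: walk.induct) auto

lemma walk_trans: "walk X Adj m y z \<Longrightarrow> walk X Adj n x y \<Longrightarrow> walk X Adj (n+m) x z"
proof (induction m y z rule: walk.induct)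
  case (walk0 x) then show ?case by simp
next
  case (walkS m y' z' w)
  have "walk X Adj (n + m) x z'" using walkS.IH walkS.prems .
  from walk.walkS[OF this walkS.hyps(2) walkS.hyps(3)] show ?case by simp
qed

lemma walk1: "Adj x y \<Longrightarrow> walk X Adj 1 x y"
proof -
  assume a: "Adj x y"
  have xy: "x \<in> X" "y \<in> X" using adjX[OF a] by auto
  have "walk X Adj 0 x x" using xy(1) by (rule walk.walk0)
  from walk.walkS[OF this a xy(2)] show ?thesis by simp
qed

lemma walk_sym: "walk X Adj n x y \<Longrightarrow> walk X Adj n y x"
proof (induction n x y rule: walk.induct)
  case (walk0 x) then show ?case by (rule walk.intros)
next
  case (walkS n x y z)
  have "walk X Adj 1 z y" using walkS.hyps(2) adj_sym walk1 by blast
  from walk_trans[OF walkS.IH this] show ?case by simp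
qed

lemma walk0_eq: assumes "walk X Adj 0 x y" shows "x = y"
  using assms by cases auto

lemma walk1_adj: assumes "walk X Adj 1 x y" shows "Adj x y"
  using assms
proof cases
  case (walkS n m) then show ?thesis using walk0_eq by auto
qed simp

lemma d_walk: "x \<in> X \<Longrightarrow> y \<in> X \<Longrightarrow> walk X Adj (d x y) x y"
  unfolding gdist_def using conn by (rule LeastI_ex)

lemma d_le: "walk X Adj n x y \<Longrightarrow> d x y \<le> n"
  unfolding gdist_def by (rule Least_le)

lemma d_refl: "x \<in> X \<Longrightarrow> d x x = 0"
  using d_le[OF walk.walk0] by simp

lemma d0: "x \<in> X \<Longrightarrow> y \<in> X \<Longrightarrow> d x y = 0 \<longleftrightarrow> x = y"
proof
  assume "x \<in> X" "y \<in> X" "d x y = 0" then show "x = y" using d_walk[of x y] walk0_eq by simp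
qed (simp add: d_refl)

lemma d_sym: "x \<in> X \<Longrightarrow> y \<in> X \<Longrightarrow> d x y = d y x"
proof -
  assume a: "x \<in> X" "y \<in> X"
  have "d y x \<le> d x y" using d_le[OF walk_sym[OF d_walk[OF a]]] .
  moreover have "d x y \<le> d y x" using d_le[OF walk_sym[OF d_walk[OF a(2) a(1)]]] .
  ultimately show ?thesis by simp
qed

lemma d_tri: "x \<in> X \<Longrightarrow> y \<in> X \<Longrightarrow> z \<in> X \<Longrightarrow> d x z \<le> d x y + d y z"
  using d_le[OF walk_trans[OF d_walk[of y z] d_walk[of x y]]] by simp

lemma d1: "x \<in> X \<Longrightarrow> y \<in> X \<Longrightarrow> d x y = 1 \<longleftrightarrow> Adj x y"
proof
  assume "x \<in> X" "y \<in> X" "d x y = 1" then show "Adj x y" using d_walk[of x y] walk1_adj by simp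
next
  assume a: "x \<in> X" "y \<in> X" "Adj x y"
  then have "d x y \<le> 1" using walk1 d_le by blast
  moreover have "x \<noteq> y" using a adj_irr by auto
  ultimately show "d x y = 1" using d0 a by fastforce
qed

lemma d_adj: "Adj u m \<Longrightarrow> v \<in> X \<Longrightarrow> d v m \<le> d v u + 1 \<and> d v u \<le> d v m + 1"
proof -
  assume a: "Adj u m" "v \<in> X"
  have uX: "u \<in> X" and mX: "m \<in> X" using adjX a by auto
  have "d u m = 1" "d m u = 1" using d1 a uX mX adj_sym by auto
  then show ?thesis using d_tri[OF a(2) uX mX] d_tri[OF a(2) mX uX] by auto
qed

definition bb :: "nat \<Rightarrow> nat" where "bb j = (if j < 4 then b j else 0)"
definition cc :: "nat \<Rightarrow> nat" where "cc j = (if 1 \<le> j \<and> j \<le> 4 then c j else 0)"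
definition aa :: "nat \<Rightarrow> nat" where "aa j = b 0 - bb j - cc j"

lemma card_nbr: assumes "u \<in> X" shows "card {m\<in>X. Adj u m} = b 0"
proof -
  have "card {z\<in>X. Adj u z \<and> d u z = d u u + 1} = b (d u u)"
    using cnt_b[OF assms assms] d_refl[OF assms] by simp
  moreover have "{z\<in>X. Adj u z \<and> d u z = d u u + 1} = {m\<in>X. Adj u m}"
    using d_refl[OF assms] d1[OF assms] by auto
  ultimately show ?thesis using d_refl[OF assms] by simp
qed

lemma fin_S: "finite {m\<in>X. P m}" using finX by simp

lemma card_layer:
  assumes uX: "u \<in> X" and vX: "v \<in> X"
  shows "card {m\<in>X. Adj u m \<and> d v m = i} =
    (if i + 1 = d v u then cc (d v u) else if i = d v u then aa (d v u)
     else if i = d v u + 1 then bb (d v u) else 0)"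
proof -
  define j where "j = d v u"
  define S where "S i = {m\<in>X. Adj u m \<and> d v m = i}" for i
  have j4: "j \<le> 4" using diam vX uX j_def by simp
  have near: "m \<in> S i \<Longrightarrow> i + 1 = j \<or> i = j \<or> i = j + 1" for m i
    using d_adj[of u m v] vX unfolding S_def j_def by auto
  have Sc: "card (S i) = cc j" if "i + 1 = j" for i
  proof -
    have "card {z\<in>X. Adj u z \<and> d v z = d v u - 1} = c (d v u)"
      using cnt_c[OF vX uX] that j_def by simp
    moreover have "d v u - 1 = i" using that j_def by simp
    ultimately show ?thesis using that j4 unfolding S_def cc_def j_def by auto
  qed
  have Sb: "card (S i) = bb j" if "i = j + 1" for i
  proof (cases "j < 4")
    case True
    have "card {z\<in>X. Adj u z \<and> d v z = d v u + 1} = b (d v u)"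
      using cnt_b[OF vX uX] True j_def by simp
    then show ?thesis using that True unfolding S_def bb_def j_def by auto
  next
    case False
    have "S i = {}" using that False diam[OF vX] unfolding S_def by fastforce
    then show ?thesis using False unfolding bb_def by simp
  qed
  have Sj: "card (S j) = aa j"
  proof (cases "j = 0")
    case True
    then have "v = u" using d0 uX vX j_def by simp
    have "m \<notin> S j" for m
    proof
      assume "m \<in> S j"
      then have "m \<in> X" "Adj u m" "d u m = 0" using True \<open>v = u\<close> unfolding S_def by auto
      then show False using d0[OF uX] adj_irr by auto
    qed
    then have "S j = {}" by blast
    moreover have "aa j = 0" using True unfolding aa_def bb_def cc_def by simp
    ultimately show ?thesis by simp
  next
    case False
    have un: "{m\<in>X. Adj u m} = S (j - 1) \<union> S j \<union> S (j+1)"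
    proof -
      have "m \<in> S (j-1) \<union> S j \<union> S (j+1)" if "m \<in> X" "Adj u m" for m
        using near[of m "d v m"] that False unfolding S_def by auto
      then show ?thesis unfolding S_def by auto
    qed
    have dis1: "S (j-1) \<inter> S j = {}" "S (j-1) \<inter> S (j+1) = {}" "S j \<inter> S (j+1) = {}"
      using False unfolding S_def by auto
    have "card {m\<in>X. Adj u m} = card (S (j-1)) + card (S j) + card (S (j+1))"
      unfolding un using dis1 fin_S
      by (simp add: card_Un_disjoint S_def Int_Un_distrib2)
    then have "b 0 = cc j + card (S j) + bb j" using card_nbr[OF uX] Sc[of "j-1"] Sb[of "j+1"] False by simp
    then show ?thesis unfolding aa_def by simp
  qed
  have S0: "card (S i) = 0" if "\<not> (i + 1 = j \<or> i = j \<or> i = j + 1)" for i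
  proof -
    have "S i = {}" using near that by blast
    then show ?thesis by simp
  qed
  show ?thesis
    using Sc Sb Sj S0 unfolding S_def[symmetric] j_def[symmetric] by auto
qed

lemma nbr_sum:
  fixes f :: "nat \<Rightarrow> 'b::comm_ring_1"
  assumes uX: "u \<in> X" and vX: "v \<in> X"
  shows "(\<Sum>m\<in>{m\<in>X. Adj u m}. f (d v m)) =
    of_nat (cc (d v u)) * f (d v u - 1) + of_nat (aa (d v u)) * f (d v u) + of_nat (bb (d v u)) * f (d v u + 1)"
proof -
  have bnd: "\<forall>m\<in>{m\<in>X. Adj u m}. d v m \<le> 5" using diam[OF vX] by fastforce
  have eq: "\<And>i. {m\<in>{m\<in>X. Adj u m}. d v m = i} = {m\<in>X. Adj u m \<and> d v m = i}" by auto
  have "(\<Sum>m\<in>{m\<in>X. Adj u m}. f (d v m)) = (\<Sum>i\<le>5. of_nat (card {m\<in>X. Adj u m \<and> d v m = i}) * f i)"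
    using sum_fiber[OF fin_S bnd, of f] unfolding eq .
  also have "\<dots> = (\<Sum>i\<le>5. of_nat (if i + 1 = d v u then cc (d v u) else if i = d v u then aa (d v u)
     else if i = d v u + 1 then bb (d v u) else 0) * f i)"
    using card_layer[OF uX vX] by simp
  also have "\<dots> = of_nat (cc (d v u)) * f (d v u - 1) + of_nat (aa (d v u)) * f (d v u) + of_nat (bb (d v u)) * f (d v u + 1)"
  proof -
    have e: "{..5::nat} = {0,1,2,3,4,5}" by auto
    have "d v u \<le> 4" using diam[OF vX uX] .
    then have "d v u = 0 \<or> d v u = 1 \<or> d v u = 2 \<or> d v u = 3 \<or> d v u = 4" by auto
    then show ?thesis unfolding e by (elim disjE) (simp_all add: cc_def numeral_eq_Suc)
  qed
  finally show ?thesis .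
qed

lemma rec_sum:
  fixes \<phi> :: "'a \<Rightarrow> 'b::comm_ring_1"
  assumes uX: "u \<in> X"
  shows "(\<Sum>m\<in>{m\<in>X. Adj u m}. \<Sum>m'\<in>{m'\<in>X. d m m' = i}. \<phi> m') =
    of_nat (cc (i+1)) * (\<Sum>m'\<in>{m'\<in>X. d u m' = i+1}. \<phi> m')
    + of_nat (aa i) * (\<Sum>m'\<in>{m'\<in>X. d u m' = i}. \<phi> m')
    + (if 1 \<le> i then of_nat (bb (i-1)) * (\<Sum>m'\<in>{m'\<in>X. d u m' = i-1}. \<phi> m') else 0)"
proof -
  define coef where "coef j = (if i + 1 = j then cc j else if i = j then aa j else if i = j + 1 then bb j else 0)" for j
  have "(\<Sum>m\<in>{m\<in>X. Adj u m}. \<Sum>m'\<in>{m'\<in>X. d m m' = i}. \<phi> m') =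
        (\<Sum>m\<in>{m\<in>X. Adj u m}. \<Sum>m'\<in>X. if d m m' = i then \<phi> m' else 0)"
    by (simp add: sum.inter_filter[OF finX])
  also have "\<dots> = (\<Sum>m'\<in>X. \<Sum>m\<in>{m\<in>X. Adj u m}. if d m m' = i then \<phi> m' else 0)"
    by (rule sum.swap)
  also have "\<dots> = (\<Sum>m'\<in>X. of_nat (card {m\<in>X. Adj u m \<and> d m' m = i}) * \<phi> m')"
  proof (rule sum.cong[OF refl])
    fix m' assume m'X: "m' \<in> X"
    have "(\<Sum>m\<in>{m\<in>X. Adj u m}. if d m m' = i then \<phi> m' else 0) =
          (\<Sum>m\<in>{m\<in>X. Adj u m}. if d m' m = i then \<phi> m' else 0)"
      using d_sym m'X by (intro sum.cong) auto
    also have "\<dots> = (\<Sum>m\<in>{m\<in>{m\<in>X. Adj u m}. d m' m = i}. \<phi> m')"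
      by (rule sum.inter_filter[OF fin_S, symmetric])
    also have "\<dots> = of_nat (card {m\<in>{m\<in>X. Adj u m}. d m' m = i}) * \<phi> m'"
      by simp
    also have "{m\<in>{m\<in>X. Adj u m}. d m' m = i} = {m\<in>X. Adj u m \<and> d m' m = i}" by auto
    finally show "(\<Sum>m\<in>{m\<in>X. Adj u m}. if d m m' = i then \<phi> m' else 0) =
       of_nat (card {m\<in>X. Adj u m \<and> d m' m = i}) * \<phi> m'" .
  qed
  also have "\<dots> = (\<Sum>m'\<in>X. of_nat (coef (d u m')) * \<phi> m')"
    using card_layer[OF uX] d_sym uX unfolding coef_def by (intro sum.cong) auto
  also have "\<dots> = (\<Sum>m'\<in>X. (if d u m' = i+1 then of_nat (cc (i+1)) * \<phi> m' else 0)
     + (if d u m' = i then of_nat (aa i) * \<phi> m' else 0)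
     + (if 1 \<le> i \<and> d u m' = i - 1 then of_nat (bb (i-1)) * \<phi> m' else 0))"
    unfolding coef_def by (intro sum.cong) auto
  also have "\<dots> = (\<Sum>m'\<in>X. if d u m' = i+1 then of_nat (cc (i+1)) * \<phi> m' else 0)
     + (\<Sum>m'\<in>X. if d u m' = i then of_nat (aa i) * \<phi> m' else 0)
     + (\<Sum>m'\<in>X. if 1 \<le> i \<and> d u m' = i - 1 then of_nat (bb (i-1)) * \<phi> m' else 0)"
    by (simp only: sum.distrib)
  also have "\<dots> = of_nat (cc (i+1)) * (\<Sum>m'\<in>{m'\<in>X. d u m' = i+1}. \<phi> m')
    + of_nat (aa i) * (\<Sum>m'\<in>{m'\<in>X. d u m' = i}. \<phi> m')
    + (if 1 \<le> i then of_nat (bb (i-1)) * (\<Sum>m'\<in>{m'\<in>X. d u m' = i-1}. \<phi> m') else 0)"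
  proof -
    have h: "(\<Sum>m'\<in>X. if P m' then a * \<phi> m' else 0) = a * (\<Sum>m'\<in>{m'\<in>X. P m'}. \<phi> m')" for P and a :: 'b
    proof -
      have "(\<Sum>m'\<in>{m'\<in>X. P m'}. \<phi> m') = (\<Sum>m'\<in>X. if P m' then \<phi> m' else 0)"
        by (rule sum.inter_filter[OF finX])
      then show ?thesis by (simp add: sum_distrib_left if_distrib cong: if_cong)
    qed
    show ?thesis by (cases "1 \<le> i") (simp_all only: h, simp_all)
  qed
  finally show ?thesis .
qed

lemma bpos: "j < 4 \<Longrightarrow> 1 \<le> b j"
proof -
  assume j: "j < 4"
  have "q \<ge> 2" using q2 .
  have "j = 0 \<or> j = 1 \<or> j = 2 \<or> j = 3" using j by auto
  moreover have "1 \<le> b 0" using b0 q2 by simp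
  moreover have "1 \<le> b 1"
  proof -
    have "q*q \<ge> 2*2" using q2 by (intro mult_le_mono) auto
    then have "q^2 - 1 \<ge> 1" by (simp add: power2_eq_square)
    moreover have "p + 1 \<ge> 1" by simp
    ultimately have "(q^2 - 1) * (p+1) \<ge> 1*1" by (intro mult_le_mono) auto
    then show ?thesis using b1 by simp
  qed
  moreover have "1 \<le> b 2"
  proof -
    have "q*(p+q) \<ge> 2*(1+2)" using q2 p1 by (intro mult_le_mono) auto
    then show ?thesis using b2 by simp
  qed
  moreover have "1 \<le> b 3" using b3 by simp
  ultimately show ?thesis by auto
qed

lemma ext_step:
  assumes uX: "u \<in> X" and wX: "w \<in> X" and j: "d u w < 4"
  shows "\<exists>m\<in>X. Adj w m \<and> d u m = d u w + 1"
proof -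
  have c1: "card {z\<in>X. Adj w z \<and> d u z = d u w + 1} \<ge> 1" using cnt_b[OF uX wX j] bpos[OF j] by simp
  have "{z\<in>X. Adj w z \<and> d u z = d u w + 1} \<noteq> {}"
  proof
    assume "{z\<in>X. Adj w z \<and> d u z = d u w + 1} = {}"
    then have "card {z\<in>X. Adj w z \<and> d u z = d u w + 1} = 0" by (simp only: card.empty)
    then show False using c1 by simp
  qed
  then show ?thesis by blast
qed

lemma far:
  assumes uX: "u \<in> X" and vX: "v \<in> X"
  shows "d u v + n \<le> 4 \<Longrightarrow> \<exists>w\<in>X. d u w = d u v + n \<and> d v w \<le> n"
proof (induction n)
  case 0 then show ?case using vX d_refl[OF vX] by auto
next
  case (Suc n)
  then obtain w where w: "w \<in> X" "d u w = d u v + n" "d v w \<le> n" by auto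
  then obtain m where m: "m \<in> X" "Adj w m" "d u m = d u w + 1" using ext_step[OF uX w(1)] Suc.prems by auto
  have "d v m \<le> d v w + 1" using d_adj[OF m(2) vX] by simp
  then show ?case using m w by auto
qed

definition ant :: "'a \<Rightarrow> 'a" where "ant u = (THE y. y \<in> X \<and> d u y = 4)"

lemma ant_ex1: assumes "u \<in> X" shows "\<exists>!y. y \<in> X \<and> d u y = 4"
proof -
  have "card {y\<in>X. d u y = 4} = 1" using adc assms unfolding antipodal_double_cover_def by auto
  then obtain y where y: "{y\<in>X. d u y = 4} = {y}" using card_1_singletonE by blast
  then have "y \<in> X \<and> d u y = 4" by auto
  moreover have "\<forall>z. z \<in> X \<and> d u z = 4 \<longrightarrow> z = y" using y by auto
  ultimately show ?thesis by blast
qed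

lemma ant: assumes "u \<in> X" shows "ant u \<in> X" "d u (ant u) = 4"
  using theI'[OF ant_ex1[OF assms]] unfolding ant_def by auto

lemma ant_uniq: assumes "u \<in> X" "y \<in> X" "d u y = 4" shows "y = ant u"
  using ant_ex1[OF assms(1)] ant[OF assms(1)] assms by blast

lemma geo: assumes uX: "u \<in> X" and vX: "v \<in> X" shows "d u v + d v (ant u) = 4"
proof -
  have "d u v \<le> 4" using diam uX vX by simp
  then obtain w where w: "w \<in> X" "d u w = 4" "d v w \<le> 4 - d u v"
    using far[OF uX vX, of "4 - d u v"] by auto
  have "w = ant u" using ant_uniq[OF uX w(1) w(2)] .
  moreover have "d u (ant u) \<le> d u v + d v (ant u)" using d_tri[OF uX vX ant(1)[OF uX]] .
  ultimately show ?thesis using w ant(2)[OF uX] \<open>d u v \<le> 4\<close> by auto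
qed

lemma ant_ant: assumes "u \<in> X" shows "ant (ant u) = u"
  using ant_uniq[OF ant(1)[OF assms] assms] d_sym[OF assms ant(1)[OF assms]] ant(2)[OF assms] by simp

lemma cpos_cc: "1 \<le> j \<Longrightarrow> j \<le> 4 \<Longrightarrow> cc j \<ge> 1"
proof -
  assume j: "1 \<le> j" "j \<le> 4"
  then have "j = 1 \<or> j = 2 \<or> j = 3 \<or> j = 4" by auto
  moreover have "c 1 \<ge> 1" using c1 by simp
  moreover have "c 2 \<ge> 1"
  proof -
    have "q*(p+q) \<ge> 2*(1+2)" using q2 p1 by (intro mult_le_mono) auto
    then show ?thesis using c2 by simp
  qed
  moreover have "c 3 \<ge> 1" using c3 b1 bpos[of 1] by simp
  moreover have "c 4 \<ge> 1" using c4 b0 bpos[of 0] by simp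
  ultimately show ?thesis unfolding cc_def using j by auto
qed

definition cosq :: "real \<Rightarrow> (nat \<Rightarrow> real) \<Rightarrow> bool" where
  "cosq \<theta> \<omega> \<longleftrightarrow> \<omega> 0 \<noteq> 0 \<and> (\<forall>j\<le>4. of_nat (cc j) * \<omega> (j-1) + of_nat (aa j) * \<omega> j + of_nat (bb j) * \<omega> (j+1) = \<theta> * \<omega> j)"

fun lamf :: "real \<Rightarrow> nat \<Rightarrow> real" where
  "lamf \<theta> 0 = 1"
| "lamf \<theta> (Suc 0) = \<theta>"
| "lamf \<theta> (Suc (Suc i)) = (\<theta> * lamf \<theta> (Suc i) - of_nat (aa (Suc i)) * lamf \<theta> (Suc i) - of_nat (bb i) * lamf \<theta> i) / of_nat (cc (Suc (Suc i)))"

lemma cos_A: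
  assumes cq: "cosq \<theta> \<omega>" and uX: "u \<in> X" and vX: "v \<in> X"
  shows "(\<Sum>m\<in>{m\<in>X. Adj u m}. \<omega> (d m v)) = \<theta> * \<omega> (d u v)"
proof -
  have "(\<Sum>m\<in>{m\<in>X. Adj u m}. \<omega> (d m v)) = (\<Sum>m\<in>{m\<in>X. Adj u m}. \<omega> (d v m))"
    using d_sym vX by (intro sum.cong) auto
  also have "\<dots> = \<theta> * \<omega> (d v u)"
    using nbr_sum[OF uX vX, of \<omega>] cq diam[OF vX uX] unfolding cosq_def by simp
  finally show ?thesis using d_sym[OF uX vX] by simp
qed

lemma S_lam:
  assumes cq: "cosq \<theta> \<omega>"
  shows "i \<le> 3 \<Longrightarrow> (\<forall>u\<in>X. \<forall>v\<in>X. (\<Sum>m\<in>{m\<in>X. d u m = i}. \<omega> (d m v)) = lamf \<theta> i * \<omega> (d u v)) \<and>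
     (\<forall>u\<in>X. \<forall>v\<in>X. (\<Sum>m\<in>{m\<in>X. d u m = Suc i}. \<omega> (d m v)) = lamf \<theta> (Suc i) * \<omega> (d u v))"
proof (induction i)
  case 0
  have A: "(\<Sum>m\<in>{m\<in>X. d u m = 0}. \<omega> (d m v)) = lamf \<theta> 0 * \<omega> (d u v)" if "u \<in> X" "v \<in> X" for u v
  proof -
    have "{m\<in>X. d u m = 0} = {u}" using d0 that by auto
    then show ?thesis by simp
  qed
  have B: "(\<Sum>m\<in>{m\<in>X. d u m = Suc 0}. \<omega> (d m v)) = lamf \<theta> (Suc 0) * \<omega> (d u v)" if "u \<in> X" "v \<in> X" for u v
  proof -
    have "{m\<in>X. d u m = Suc 0} = {m\<in>X. Adj u m}" using d1 that by auto
    then show ?thesis using cos_A[OF cq that] by simp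
  qed
  show ?case using A B by auto
next
  case (Suc i)
  then have IH: "\<forall>u\<in>X. \<forall>v\<in>X. (\<Sum>m\<in>{m\<in>X. d u m = i}. \<omega> (d m v)) = lamf \<theta> i * \<omega> (d u v)"
      "\<forall>u\<in>X. \<forall>v\<in>X. (\<Sum>m\<in>{m\<in>X. d u m = Suc i}. \<omega> (d m v)) = lamf \<theta> (Suc i) * \<omega> (d u v)"
    by auto
  have "(\<Sum>m\<in>{m\<in>X. d u m = Suc (Suc i)}. \<omega> (d m v)) = lamf \<theta> (Suc (Suc i)) * \<omega> (d u v)"
    if uX: "u \<in> X" and vX: "v \<in> X" for u v
  proof -
    let ?R = "\<lambda>l. (\<Sum>m'\<in>{m'\<in>X. d u m' = l}. \<omega> (d m' v))"
    have r: "(\<Sum>m\<in>{m\<in>X. Adj u m}. \<Sum>m'\<in>{m'\<in>X. d m m' = Suc i}. \<omega> (d m' v)) =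
      of_nat (cc (Suc i + 1)) * ?R (Suc i + 1) + of_nat (aa (Suc i)) * ?R (Suc i)
      + (if 1 \<le> Suc i then of_nat (bb (Suc i - 1)) * ?R (Suc i - 1) else 0)"
      by (rule rec_sum[OF uX])
    have "(\<Sum>m\<in>{m\<in>X. Adj u m}. \<Sum>m'\<in>{m'\<in>X. d m m' = Suc i}. \<omega> (d m' v)) =
        (\<Sum>m\<in>{m\<in>X. Adj u m}. lamf \<theta> (Suc i) * \<omega> (d m v))"
      using IH(2) vX by (intro sum.cong) auto
    also have "\<dots> = lamf \<theta> (Suc i) * (\<theta> * \<omega> (d u v))"
      using cos_A[OF cq uX vX] by (simp add: sum_distrib_left[symmetric])
    finally have l: "(\<Sum>m\<in>{m\<in>X. Adj u m}. \<Sum>m'\<in>{m'\<in>X. d m m' = Suc i}. \<omega> (d m' v)) =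
       lamf \<theta> (Suc i) * (\<theta> * \<omega> (d u v))" .
    have ccpos: "real (cc (Suc (Suc i))) \<noteq> 0" using cpos_cc[of "Suc (Suc i)"] Suc.prems by simp
    have "of_nat (cc (Suc (Suc i))) * ?R (Suc (Suc i)) =
        lamf \<theta> (Suc i) * (\<theta> * \<omega> (d u v)) - of_nat (aa (Suc i)) * (lamf \<theta> (Suc i) * \<omega> (d u v))
        - of_nat (bb i) * (lamf \<theta> i * \<omega> (d u v))"
      using r l IH uX vX by simp
    then show ?thesis using ccpos by (simp add: field_simps)
  qed
  then show ?case using IH by auto
qed

lemma S_lam': assumes "cosq \<theta> \<omega>" "i \<le> 4" "u \<in> X" "v \<in> X"
  shows "(\<Sum>m\<in>{m\<in>X. d u m = i}. \<omega> (d m v)) = lamf \<theta> i * \<omega> (d u v)"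
proof (cases "i = 4")
  case True then show ?thesis using S_lam[OF assms(1), of 3] assms by (simp add: numeral_eq_Suc)
next
  case False then show ?thesis using S_lam[OF assms(1), of i] assms by simp
qed

definition cF :: "real \<Rightarrow> (nat \<Rightarrow> real) \<Rightarrow> real" where "cF \<theta> \<omega> = (\<Sum>i\<le>4. \<omega> i * lamf \<theta> i)"

lemma sq:
  assumes cq: "cosq \<theta> \<omega>" and uX: "u \<in> X" and vX: "v \<in> X"
  shows "(\<Sum>m\<in>X. \<omega> (d u m) * \<omega> (d m v)) = cF \<theta> \<omega> * \<omega> (d u v)"
proof -
  have "(\<Sum>m\<in>X. \<omega> (d u m) * \<omega> (d m v)) = (\<Sum>i\<le>4. \<Sum>m\<in>{m\<in>X. d u m = i}. \<omega> (d u m) * \<omega> (d m v))"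
    using diam[OF uX] by (intro sum_fiber_gen[OF finX]) auto
  also have "\<dots> = (\<Sum>i\<le>4. \<omega> i * (\<Sum>m\<in>{m\<in>X. d u m = i}. \<omega> (d m v)))"
    by (intro sum.cong) (auto simp: sum_distrib_left)
  also have "\<dots> = (\<Sum>i\<le>4. \<omega> i * (lamf \<theta> i * \<omega> (d u v)))"
    using S_lam'[OF cq _ uX vX] by (intro sum.cong) auto
  also have "\<dots> = cF \<theta> \<omega> * \<omega> (d u v)"
    unfolding cF_def by (simp add: sum_distrib_right mult.assoc)
  finally show ?thesis .
qed

lemma cF_pos:
  assumes cq: "cosq \<theta> \<omega>"
  shows "cF \<theta> \<omega> \<noteq> 0"
proof
  assume c0: "cF \<theta> \<omega> = 0"
  obtain u where uX: "u \<in> X" using Xne by auto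
  have "(\<Sum>m\<in>X. \<omega> (d u m) * \<omega> (d m u)) = 0"
    using sq[OF cq uX uX] c0 by simp
  moreover have "(\<Sum>m\<in>X. \<omega> (d u m) * \<omega> (d m u)) \<ge> \<omega> (d u u) * \<omega> (d u u)"
  proof -
    have "(\<Sum>m\<in>X. \<omega> (d u m) * \<omega> (d m u)) = (\<Sum>m\<in>X. \<omega> (d u m) * \<omega> (d u m))"
      using d_sym uX by (intro sum.cong) auto
    moreover have "(\<Sum>m\<in>{u}. \<omega> (d u m) * \<omega> (d u m)) \<le> (\<Sum>m\<in>X. \<omega> (d u m) * \<omega> (d u m))"
      using uX finX by (intro sum_mono2) auto
    ultimately show ?thesis by simp
  qed
  moreover have "\<omega> (d u u) * \<omega> (d u u) > 0"
  proof -
    have "\<omega> (d u u) \<noteq> 0" using d_refl[OF uX] cq unfolding cosq_def by simp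
    then show ?thesis by (simp add: zero_less_mult_iff linorder_neq_iff disj_commute)
  qed
  ultimately show False by simp
qed

abbreviation "P \<equiv> real p"
abbreviation "Q \<equiv> real q"
abbreviation "S \<equiv> P*Q + P + Q"

lemma PQpos: "P \<ge> 1" "Q \<ge> 2" "S > 0" "P * Q \<ge> 0"
proof -
  show P: "P \<ge> 1" using p1 by simp
  show Q: "Q \<ge> 2" using q2 by simp
  show PQ: "P * Q \<ge> 0" using P Q by simp
  show "S > 0" using P Q PQ by linarith
qed

lemma rb0: "real (b 0) = Q * S" using b0 by simp
lemma rb1: "real (b 1) = (Q^2 - 1) * (P + 1)"
proof -
  have "q^2 \<ge> 1" using q2 by simp
  then have e: "real (q^2 - 1) = Q^2 - 1" by (simp add: of_nat_diff)
  have "real (b 1) = real (q^2 - 1) * real (p + 1)" unfolding b1 by (simp only: of_nat_mult)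
  then show ?thesis unfolding e by simp
qed
lemma rb2: "real (b 2) = Q * (P + Q) / 2"
proof -
  have "real (2 * b 2) = real (q * (p + q))" using b2 by simp
  then show ?thesis by simp
qed
lemma rc2: "real (c 2) = Q * (P + Q) / 2"
proof -
  have "real (2 * c 2) = real (q * (p + q))" using c2 by simp
  then show ?thesis by simp
qed
lemma rc3: "real (c 3) = (Q^2 - 1) * (P + 1)" using rb1 b1 c3 by simp
lemma rc4: "real (c 4) = Q * S" using c4 by simp

lemma rbb: "real (bb 0) = Q * S" "real (bb 1) = (Q^2 - 1) * (P + 1)" "real (bb 2) = Q * (P + Q) / 2"
  "real (bb 3) = 1" "real (bb 4) = 0"
  using rb0 rb1 rb2 b3 unfolding bb_def by auto
lemma rcc: "real (cc 0) = 0" "real (cc 1) = 1" "real (cc 2) = Q * (P + Q) / 2"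
  "real (cc 3) = (Q^2 - 1) * (P + 1)" "real (cc 4) = Q * S"
  using c1 rc2 rc3 rc4 unfolding cc_def by auto

lemma raa_gen: assumes "real (bb j) + real (cc j) \<le> real (b 0)"
  shows "real (aa j) = real (b 0) - real (bb j) - real (cc j)"
proof -
  have "bb j + cc j \<le> b 0" using assms by (metis of_nat_add of_nat_le_iff)
  then show ?thesis unfolding aa_def by (simp add: of_nat_diff)
qed

lemma raa: "real (aa 0) = 0" "real (aa 1) = P * (Q + 1)" "real (aa 2) = P * Q^2"
  "real (aa 3) = P * (Q + 1)" "real (aa 4) = 0"
proof -
  have PQ: "P * Q \<ge> 0" "Q * Q * P \<ge> 0" using PQpos by auto
  have i0: "real (bb 0) + real (cc 0) \<le> real (b 0)" using rbb rcc rb0 by simp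
  have i1: "real (bb 1) + real (cc 1) \<le> real (b 0)" unfolding rbb rcc rb0 using PQ by (simp add: algebra_simps power2_eq_square)
  have i2: "real (bb 2) + real (cc 2) \<le> real (b 0)" unfolding rbb rcc rb0 using PQ by (simp add: algebra_simps power2_eq_square)
  have i3: "real (bb 3) + real (cc 3) \<le> real (b 0)" unfolding rbb rcc rb0 using PQ by (simp add: algebra_simps power2_eq_square)
  have i4: "real (bb 4) + real (cc 4) \<le> real (b 0)" using rbb rcc rb0 by simp
  show "real (aa 0) = 0" using raa_gen[OF i0] rbb rcc rb0 by simp
  show "real (aa 1) = P * (Q + 1)"
    unfolding raa_gen[OF i1] rbb rcc rb0 by (simp add: algebra_simps power2_eq_square)
  show "real (aa 2) = P * Q^2"
    unfolding raa_gen[OF i2] rbb rcc rb0 by (simp add: algebra_simps power2_eq_square)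
  show "real (aa 3) = P * (Q + 1)"
    unfolding raa_gen[OF i3] rbb rcc rb0 by (simp add: algebra_simps power2_eq_square)
  show "real (aa 4) = 0" using raa_gen[OF i4] rbb rcc rb0 by simp
qed

definition omD :: "nat \<Rightarrow> real" where
  "omD i = (if i = 0 then S*(P+1) else if i = 1 then -Q*(P+1) else if i = 2 then P+Q
     else if i = 3 then -Q*(P+1) else if i = 4 then S*(P+1) else 0)"
definition om1 :: "nat \<Rightarrow> real" where
  "om1 i = (if i = 0 then Q else if i = 1 then 1 else if i = 2 then 0
     else if i = 3 then -1 else if i = 4 then -Q else 0)"

lemma SP0: "S \<noteq> 0" "P + 1 \<noteq> 0" "Q \<noteq> 0"
proof -
  show "S \<noteq> 0" using PQpos(3) by linarith
  show "P + 1 \<noteq> 0" using PQpos(1) by linarith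
  show "Q \<noteq> 0" using PQpos(2) by linarith
qed

lemma cD0: "real (cc 0) * omD (0-1) + real (aa 0) * omD 0 + real (bb 0) * omD (0+1) = -(Q^2) * omD 0"
  unfolding rbb rcc raa by (simp add: omD_def algebra_simps power2_eq_square)
lemma cD1: "real (cc 1) * omD (1-1) + real (aa 1) * omD 1 + real (bb 1) * omD (1+1) = -(Q^2) * omD 1"
  unfolding rbb rcc raa by (simp add: omD_def algebra_simps power2_eq_square)
lemma cD2: "real (cc 2) * omD (2-1) + real (aa 2) * omD 2 + real (bb 2) * omD (2+1) = -(Q^2) * omD 2"
  unfolding rbb rcc raa by (simp add: omD_def algebra_simps power2_eq_square)
lemma cD3: "real (cc 3) * omD (3-1) + real (aa 3) * omD 3 + real (bb 3) * omD (3+1) = -(Q^2) * omD 3"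
  unfolding rbb rcc raa by (simp add: omD_def algebra_simps power2_eq_square)
lemma cD4: "real (cc 4) * omD (4-1) + real (aa 4) * omD 4 + real (bb 4) * omD (4+1) = -(Q^2) * omD 4"
  unfolding rbb rcc raa by (simp add: omD_def algebra_simps power2_eq_square)
lemma c10: "real (cc 0) * om1 (0-1) + real (aa 0) * om1 0 + real (bb 0) * om1 (0+1) = S * om1 0"
  unfolding rbb rcc raa by (simp add: om1_def algebra_simps power2_eq_square add_divide_distrib[symmetric])
lemma c11: "real (cc 1) * om1 (1-1) + real (aa 1) * om1 1 + real (bb 1) * om1 (1+1) = S * om1 1"
  unfolding rbb rcc raa by (simp add: om1_def algebra_simps power2_eq_square add_divide_distrib[symmetric])
lemma c12: "real (cc 2) * om1 (2-1) + real (aa 2) * om1 2 + real (bb 2) * om1 (2+1) = S * om1 2"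
  unfolding rbb rcc raa by (simp add: om1_def algebra_simps power2_eq_square add_divide_distrib[symmetric])
lemma c13: "real (cc 3) * om1 (3-1) + real (aa 3) * om1 3 + real (bb 3) * om1 (3+1) = S * om1 3"
  unfolding rbb rcc raa by (simp add: om1_def algebra_simps power2_eq_square add_divide_distrib[symmetric])
lemma c14: "real (cc 4) * om1 (4-1) + real (aa 4) * om1 4 + real (bb 4) * om1 (4+1) = S * om1 4"
  unfolding rbb rcc raa by (simp add: om1_def algebra_simps power2_eq_square add_divide_distrib[symmetric])

lemma cosq_D: "cosq (-(Q^2)) omD"
proof -
  have "omD 0 \<noteq> 0" using SP0 unfolding omD_def by simp
  moreover have "\<forall>j\<le>4. of_nat (cc j) * omD (j-1) + of_nat (aa j) * omD j + of_nat (bb j) * omD (j+1) = -(Q^2) * omD j"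
  proof (intro allI impI)
    fix j :: nat assume "j \<le> 4"
    then have "j = 0 \<or> j = 1 \<or> j = 2 \<or> j = 3 \<or> j = 4" by auto
    then show "of_nat (cc j) * omD (j-1) + of_nat (aa j) * omD j + of_nat (bb j) * omD (j+1) = -(Q^2) * omD j"
      using cD0 cD1 cD2 cD3 cD4 by auto
  qed
  ultimately show ?thesis unfolding cosq_def by blast
qed

lemma cosq_1: "cosq S om1"
proof -
  have "om1 0 \<noteq> 0" using PQpos unfolding om1_def by simp
  moreover have "\<forall>j\<le>4. of_nat (cc j) * om1 (j-1) + of_nat (aa j) * om1 j + of_nat (bb j) * om1 (j+1) = S * om1 j"
  proof (intro allI impI)
    fix j :: nat assume "j \<le> 4"
    then have "j = 0 \<or> j = 1 \<or> j = 2 \<or> j = 3 \<or> j = 4" by auto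
    then show "of_nat (cc j) * om1 (j-1) + of_nat (aa j) * om1 j + of_nat (bb j) * om1 (j+1) = S * om1 j"
      using c10 c11 c12 c13 c14 by auto
  qed
  ultimately show ?thesis unfolding cosq_def by blast
qed

lemma loc_d:
  assumes zX: "z \<in> X" and w: "w \<in> X" "Adj z w" and w': "w' \<in> X" "Adj z w'"
  shows "d w w' = (if w = w' then 0 else if Adj w w' then 1 else 2)"
proof -
  have "d w z = 1" "d z w' = 1" using d1 zX w w' d_sym adj_sym by auto
  then have "d w w' \<le> 2" using d_tri[OF w(1) zX w'(1)] by simp
  then show ?thesis using d0[OF w(1) w'(1)] d1[OF w(1) w'(1)] by auto
qed

lemma loc_sum:
  fixes f :: "nat \<Rightarrow> real"
  assumes zX: "z \<in> X" and w: "w \<in> X" "Adj z w"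
  shows "(\<Sum>m\<in>{m\<in>X. Adj z m}. f (d w m)) = f 0 + P * (Q + 1) * f 1 + (Q^2 - 1) * (P + 1) * f 2"
proof -
  have "d w z = 1" using d1 zX w d_sym adj_sym by auto
  then show ?thesis using nbr_sum[OF zX w(1), of f] rcc raa rbb by (simp add: numeral_2_eq_2)
qed

lemma local_srg:
  assumes zX: "z \<in> X" and w1: "w1 \<in> X" "Adj z w1" and w2: "w2 \<in> X" "Adj z w2"
  shows "real (card {w\<in>{m\<in>X. Adj z m}. Adj w1 w \<and> Adj w w2}) =
     P + (P - Q) * (if Adj w1 w2 then 1 else 0) + P * Q * (if w1 = w2 then 1 else 0)"
proof -
  define N where "N = {m\<in>X. Adj z m}"
  define K where "K = real (card N)"
  have fN: "finite N" unfolding N_def using finX by simp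
  have NX: "N \<subseteq> X" unfolding N_def by auto
  have KQS: "K = Q * S" unfolding K_def N_def using card_nbr[OF zX] rb0 by simp
  have K0: "K \<noteq> 0" using KQS SP0 by simp
  define \<rho> where "\<rho> = (P + 1) * Q^3"
  define \<rho>' where "\<rho>' = S"
  have QS0: "Q * S \<noteq> 0" using SP0 by simp
  have "\<rho> = ((P + 1) * Q^2 / S) * K" unfolding \<rho>_def KQS using SP0 QS0 by (simp add: field_simps power3_eq_cube power2_eq_square)
  then have r: "\<rho> / K = (P + 1) * Q^2 / S" using K0 by simp
  have r': "\<rho>' / K = 1 / Q" unfolding \<rho>'_def KQS using SP0 QS0 by (simp add: field_simps)
  have Fr: "(\<Sum>m\<in>N. omD (d w m)) = \<rho>" if "w \<in> N" for w
  proof -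
    have "(\<Sum>m\<in>N. omD (d w m)) = omD 0 + P * (Q + 1) * omD 1 + (Q^2 - 1) * (P + 1) * omD 2"
      using loc_sum[OF zX, of w omD] that unfolding N_def by auto
    also have "\<dots> = \<rho>" unfolding \<rho>_def omD_def by (simp add: algebra_simps power2_eq_square power3_eq_cube)
    finally show ?thesis .
  qed
  have Gr: "(\<Sum>m\<in>N. om1 (d w m)) = \<rho>'" if "w \<in> N" for w
  proof -
    have "(\<Sum>m\<in>N. om1 (d w m)) = om1 0 + P * (Q + 1) * om1 1 + (Q^2 - 1) * (P + 1) * om1 2"
      using loc_sum[OF zX, of w om1] that unfolding N_def by auto
    also have "\<dots> = \<rho>'" unfolding \<rho>'_def om1_def by (simp add: algebra_simps)
    finally show ?thesis .
  qed
  have tr: "(\<Sum>w\<in>N. \<Sum>w'\<in>N. (omD (d w w') - \<rho> / K) * (om1 (d w w') - \<rho>' / K)) = 0"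
  proof -
    define h where "h i = (omD i - \<rho> / K) * (om1 i - \<rho>' / K)" for i
    have "(\<Sum>w'\<in>N. h (d w w')) = h 0 + P * (Q + 1) * h 1 + (Q^2 - 1) * (P + 1) * h 2" if "w \<in> N" for w
      using loc_sum[OF zX, of w h] that unfolding N_def by auto
    moreover have "h 0 + P * (Q + 1) * h 1 + (Q^2 - 1) * (P + 1) * h 2 = 0"
    proof -
      have hi: "h i = ((omD i * S - (P+1)*Q^2) * (om1 i * Q - 1)) / (S*Q)" for i
        unfolding h_def r r' using SP0 by (simp add: field_simps)
      have "(omD 0 * S - (P+1)*Q^2) * (om1 0 * Q - 1) + P * (Q + 1) * ((omD 1 * S - (P+1)*Q^2) * (om1 1 * Q - 1))
        + (Q^2 - 1) * (P + 1) * ((omD 2 * S - (P+1)*Q^2) * (om1 2 * Q - 1)) = 0"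
        unfolding omD_def om1_def by (simp add: algebra_simps power2_eq_square)
      then show ?thesis unfolding hi times_divide_eq_right add_divide_distrib[symmetric] by simp
    qed
    ultimately show ?thesis unfolding h_def[symmetric] by simp
  qed
  have sym: "\<And>u v. u \<in> X \<Longrightarrow> v \<in> X \<Longrightarrow> omD (d u v) = omD (d v u)"
     "\<And>u v. u \<in> X \<Longrightarrow> v \<in> X \<Longrightarrow> om1 (d u v) = om1 (d v u)" using d_sym by auto
  have Ka: "(\<Sum>w\<in>N. (omD (d w1 w) - \<rho> / K) * (om1 (d w w2) - \<rho>' / K)) = 0"
    by (rule K_arg[OF finX NX K_def K0 sym(1) sym(2) sq[OF cosq_D] sq[OF cosq_1] Fr Gr tr
          cF_pos[OF cosq_D] cF_pos[OF cosq_1]]) (use w1 w2 in \<open>auto simp: N_def\<close>)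
  define N1 where "N1 = {w\<in>N. Adj w1 w}"
  define N2 where "N2 = {w\<in>N. w \<noteq> w1 \<and> \<not> Adj w1 w}"
  define B where "B w = om1 (d w w2) - \<rho>' / K" for w
  have w1N: "w1 \<in> N" and w2N: "w2 \<in> N" using w1 w2 unfolding N_def by auto
  have Nsplit: "N = {w1} \<union> N1 \<union> N2" unfolding N1_def N2_def using w1N by auto
  have fN1: "finite N1" "finite N2" unfolding N1_def N2_def using fN by auto
  have dis: "{w1} \<inter> N1 = {}" "({w1} \<union> N1) \<inter> N2 = {}" unfolding N1_def N2_def using adj_irr by auto
  have cN1: "card N1 = aa 1"
  proof -
    have "N1 = {m\<in>X. Adj z m \<and> d w1 m = 1}" unfolding N1_def N_def using d1 w1 by auto
    moreover have "d w1 z = 1" using d1 w1 zX d_sym adj_sym by auto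
    ultimately show ?thesis using card_layer[OF zX w1(1), of 1] by simp
  qed
  have A: "omD (d w1 w) = (if w = w1 then omD 0 else if Adj w1 w then omD 1 else omD 2)" if "w \<in> N" for w
    using loc_d[OF zX w1, of w] that unfolding N_def by auto
  have Bv: "B w = (if w = w2 then Q else if Adj w w2 then 1 else 0) - 1 / Q" if "w \<in> N" for w
    using loc_d[OF zX _ _ w2, of w] that unfolding B_def N_def om1_def r' by auto
  have sumB: "(\<Sum>w\<in>N. B w) = 0"
  proof -
    have "(\<Sum>w\<in>N. om1 (d w w2)) = (\<Sum>w\<in>N. om1 (d w2 w))"
      using sym(2) NX w2N by (intro sum.cong refl) auto
    also have "\<dots> = \<rho>'" using Gr[OF w2N] .
    finally have "(\<Sum>w\<in>N. om1 (d w w2)) = \<rho>'" .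
    then have "(\<Sum>w\<in>N. B w) = \<rho>' - K * (\<rho>' / K)" unfolding B_def K_def by (simp add: sum_subtractf)
    then show ?thesis using K0 by simp
  qed
  define T1 where "T1 = (\<Sum>w\<in>N1. B w)"
  define T2 where "T2 = (\<Sum>w\<in>N2. B w)"
  have spl: "(\<Sum>w\<in>N. (omD (d w1 w) - \<rho> / K) * B w) =
      (omD 0 - \<rho> / K) * B w1 + (omD 1 - \<rho> / K) * T1 + (omD 2 - \<rho> / K) * T2"
  proof -
    have "(\<Sum>w\<in>N. (omD (d w1 w) - \<rho> / K) * B w) =
       (\<Sum>w\<in>{w1}. (omD (d w1 w) - \<rho> / K) * B w) + (\<Sum>w\<in>N1. (omD (d w1 w) - \<rho> / K) * B w)
       + (\<Sum>w\<in>N2. (omD (d w1 w) - \<rho> / K) * B w)"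
      unfolding Nsplit using fN1 dis by (simp add: sum.union_disjoint)
    moreover have "(\<Sum>w\<in>N1. (omD (d w1 w) - \<rho> / K) * B w) = (\<Sum>w\<in>N1. (omD 1 - \<rho> / K) * B w)"
      using A adj_irr unfolding N1_def by (intro sum.cong) auto
    moreover have "(\<Sum>w\<in>N2. (omD (d w1 w) - \<rho> / K) * B w) = (\<Sum>w\<in>N2. (omD 2 - \<rho> / K) * B w)"
      using A unfolding N2_def by (intro sum.cong) auto
    ultimately show ?thesis using A[OF w1N] unfolding T1_def T2_def by (simp add: sum_distrib_left)
  qed
  have T2: "T2 = - B w1 - T1"
  proof -
    have "(\<Sum>w\<in>N. B w) = B w1 + (\<Sum>w\<in>N1. B w) + (\<Sum>w\<in>N2. B w)"
      unfolding Nsplit using fN1 dis by (simp add: sum.union_disjoint)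
    then show ?thesis using sumB unfolding T1_def T2_def by simp
  qed
  have T1: "T1 = (if Adj w1 w2 then Q else 0) + real (card {w\<in>N1. Adj w w2}) - real (aa 1) / Q"
  proof -
    have "(\<Sum>w\<in>N1. B w) = (\<Sum>w\<in>N1. (if w = w2 then Q else 0) + (if Adj w w2 then 1 else 0) - 1 / Q)"
      using Bv adj_irr unfolding N1_def by (intro sum.cong) auto
    also have "\<dots> = (\<Sum>w\<in>N1. (if w = w2 then Q else 0)) + (\<Sum>w\<in>N1. (if Adj w w2 then 1 else 0)) - real (card N1) / Q"
      by (simp add: sum.distrib sum_subtractf)
    also have "(\<Sum>w\<in>N1. (if w = w2 then Q else 0)) = (if Adj w1 w2 then Q else 0)"
      using fN1 w2N unfolding N1_def by (simp add: sum.delta')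
    also have "(\<Sum>w\<in>N1. (if Adj w w2 then 1 else 0)) = real (card {w\<in>N1. Adj w w2})"
    proof -
      have "{w\<in>N1. Adj w w2} = N1 \<inter> {w. Adj w w2}" by auto
      then show ?thesis using fN1 by (simp add: sum.If_cases)
    qed
    finally show ?thesis using cN1 unfolding T1_def by simp
  qed
  have "0 = (omD 0 - \<rho> / K) * B w1 + (omD 1 - \<rho> / K) * T1 + (omD 2 - \<rho> / K) * T2"
    using Ka spl unfolding B_def by simp
  then have "(omD 0 - omD 2) * B w1 + (omD 1 - omD 2) * T1 = 0"
    unfolding T2 by (simp add: algebra_simps)
  then have eq: "(omD 0 - omD 2) * B w1 + (omD 1 - omD 2) * ((if Adj w1 w2 then Q else 0) + real (card {w\<in>N1. Adj w w2}) - real (aa 1) / Q) = 0"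
    unfolding T1 .
  have Bw1: "B w1 = (if w1 = w2 then Q else if Adj w1 w2 then 1 else 0) - 1 / Q" using Bv[OF w1N] .
  have cN: "card {w\<in>N1. Adj w w2} = card {w\<in>{m\<in>X. Adj z m}. Adj w1 w \<and> Adj w w2}"
    unfolding N1_def N_def by (rule arg_cong[where f=card]) auto
  define Nc where "Nc = real (card {w\<in>N1. Adj w w2})"
  have E: "omD 0 - omD 2 = - P * (omD 1 - omD 2)" "omD 1 - omD 2 \<noteq> 0"
  proof -
    show "omD 0 - omD 2 = - P * (omD 1 - omD 2)" unfolding omD_def by (simp add: algebra_simps)
    have "Q * (P + 1) > 0" using PQpos by simp
    moreover have "P + Q > 0" using PQpos by simp
    ultimately show "omD 1 - omD 2 \<noteq> 0" unfolding omD_def by simp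
  qed
  from eq have "(omD 1 - omD 2) * (- P * B w1 + ((if Adj w1 w2 then Q else 0) + Nc - real (aa 1) / Q)) = 0"
    unfolding E(1) Nc_def by (simp add: algebra_simps)
  then have "- P * B w1 + ((if Adj w1 w2 then Q else 0) + Nc - real (aa 1) / Q) = 0" using E(2) by simp
  then have Nc_eq: "Nc = P * B w1 - (if Adj w1 w2 then Q else 0) + real (aa 1) / Q" by simp
  have "Nc = P + (P - Q) * (if Adj w1 w2 then 1 else 0) + P * Q * (if w1 = w2 then 1 else 0)"
  proof (cases "w1 = w2")
    case True
    then have "\<not> Adj w1 w2" using adj_irr by auto
    then show ?thesis using True unfolding Nc_eq Bw1 raa using SP0 by (simp add: field_simps)
  next
    case False
    then show ?thesis unfolding Nc_eq Bw1 raa using SP0 by (cases "Adj w1 w2") (simp_all add: field_simps)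
  qed
  then show ?thesis using cN unfolding Nc_def by simp
qed

lemma mv_E: "mat_vec X (dual_idem X Adj x i) w = (\<lambda>y. if y \<in> X \<and> d x y = i then w y else 0)"
proof (rule ext)
  fix y
  show "mat_vec X (dual_idem X Adj x i) w y = (if y \<in> X \<and> d x y = i then w y else 0)"
  proof (cases "y \<in> X \<and> d x y = i")
    case True
    have "mat_vec X (dual_idem X Adj x i) w y = (\<Sum>z\<in>X. if z = y then w y else 0)"
      unfolding mat_vec_def dual_idem_def using True by (intro sum.cong) auto
    also have "\<dots> = w y" using True finX by (simp add: sum.delta')
    finally show ?thesis using True by simp
  next
    case False
    then show ?thesis unfolding mat_vec_def dual_idem_def by auto
  qed
qed

lemma mv_A: "mat_vec X (adj_mat X Adj) w = (\<lambda>y. if y \<in> X then (\<Sum>m\<in>{m\<in>X. Adj y m}. w m) else 0)"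
proof (rule ext)
  fix y
  show "mat_vec X (adj_mat X Adj) w y = (if y \<in> X then (\<Sum>m\<in>{m\<in>X. Adj y m}. w m) else 0)"
  proof (cases "y \<in> X")
    case True
    have "mat_vec X (adj_mat X Adj) w y = (\<Sum>z\<in>X. if Adj y z then w z else 0)"
      unfolding mat_vec_def adj_mat_def using True by (intro sum.cong) auto
    also have "\<dots> = (\<Sum>m\<in>{m\<in>X. Adj y m}. w m)" using finX by (simp add: sum.inter_filter)
    finally show ?thesis using True by simp
  next
    case False
    then show ?thesis unfolding mat_vec_def adj_mat_def by auto
  qed
qed

definition Amv :: "('a \<Rightarrow> complex) \<Rightarrow> ('a \<Rightarrow> complex)" where
  "Amv w = (\<lambda>y. if y \<in> X then (\<Sum>m\<in>{m\<in>X. Adj y m}. w m) else 0)"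
definition Emv :: "'a \<Rightarrow> nat \<Rightarrow> ('a \<Rightarrow> complex) \<Rightarrow> ('a \<Rightarrow> complex)" where
  "Emv x i w = (\<lambda>y. if y \<in> X \<and> d x y = i then w y else 0)"

lemma Tmod_A: "T_module X Adj x W \<Longrightarrow> w \<in> W \<Longrightarrow> Amv w \<in> W"
  unfolding T_module_def Amv_def using mv_A Talg.gen_A by metis
lemma Tmod_E: "T_module X Adj x W \<Longrightarrow> i \<le> 4 \<Longrightarrow> w \<in> W \<Longrightarrow> Emv x i w \<in> W"
  unfolding T_module_def Emv_def using mv_E Talg.gen_E by metis
lemma Tmod_add: "T_module X Adj x W \<Longrightarrow> u \<in> W \<Longrightarrow> v \<in> W \<Longrightarrow> (\<lambda>y. u y + v y) \<in> W"
  unfolding T_module_def csubspace_of_def by blast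
lemma Tmod_smult: "T_module X Adj x W \<Longrightarrow> u \<in> W \<Longrightarrow> (\<lambda>y. a * u y) \<in> W"
  unfolding T_module_def csubspace_of_def by blast
lemma Tmod_V: "T_module X Adj x W \<Longrightarrow> u \<in> W \<Longrightarrow> y \<notin> X \<Longrightarrow> u y = 0"
  unfolding T_module_def csubspace_of_def Vsp_def by blast

lemma E3_vanish:
  assumes xX: "x \<in> X" and TM: "T_module X Adj x W"
    and V01: "\<And>w y. w \<in> W \<Longrightarrow> y \<in> X \<Longrightarrow> d x y \<le> 1 \<Longrightarrow> w y = 0"
    and wW: "w \<in> W"
  shows "\<And>t. t \<in> X \<Longrightarrow> d x t = 3 \<Longrightarrow> w t = 0"
proof -
  define z where "z = ant x"
  have zX: "z \<in> X" using ant[OF xX] z_def by simp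
  have G3: "t \<in> X \<Longrightarrow> d x t = 3 \<longleftrightarrow> Adj z t" for t
    using geo[OF xX, of t] d1[of t z] zX d_sym[of t z] adj_sym unfolding z_def[symmetric] by auto
  define N where "N = {m\<in>X. Adj z m}"
  have fN: "finite N" unfolding N_def using finX by simp
  have step1: "(\<Sum>t\<in>{t\<in>X. d x t = 3 \<and> d y t = 2}. w t) = 0" if yX: "y \<in> X" and y1: "d x y = 1" for y
  proof -
    define g where "g = Emv x 3 w"
    have gW: "Amv (Amv g) \<in> W" using Tmod_A[OF TM] Tmod_E[OF TM] wW unfolding g_def by simp
    then have "Amv (Amv g) y = 0" using V01 yX y1 by simp
    moreover have "Amv (Amv g) y = (\<Sum>m\<in>{m\<in>X. Adj y m}. \<Sum>t\<in>{t\<in>X. Adj m t}. g t)"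
      unfolding Amv_def using yX by (auto intro!: sum.cong)
    moreover have "(\<Sum>m\<in>{m\<in>X. Adj y m}. \<Sum>t\<in>{t\<in>X. Adj m t}. g t) =
        (\<Sum>t\<in>X. of_nat (card {m\<in>X. Adj y m \<and> Adj m t}) * g t)"
    proof -
      have "(\<Sum>m\<in>{m\<in>X. Adj y m}. \<Sum>t\<in>{t\<in>X. Adj m t}. g t) = (\<Sum>m\<in>{m\<in>X. Adj y m}. \<Sum>t\<in>X. if Adj m t then g t else 0)"
        using finX by (simp add: sum.inter_filter)
      also have "\<dots> = (\<Sum>t\<in>X. \<Sum>m\<in>{m\<in>X. Adj y m}. if Adj m t then g t else 0)" by (rule sum.swap)
      also have "\<dots> = (\<Sum>t\<in>X. of_nat (card {m\<in>X. Adj y m \<and> Adj m t}) * g t)"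
      proof (intro sum.cong refl)
        fix t assume "t \<in> X"
        have "(\<Sum>m\<in>{m\<in>X. Adj y m}. if Adj m t then g t else 0) = (\<Sum>m\<in>{m\<in>{m\<in>X. Adj y m}. Adj m t}. g t)"
          by (rule sum.inter_filter[OF fin_S, symmetric])
        also have "{m\<in>{m\<in>X. Adj y m}. Adj m t} = {m\<in>X. Adj y m \<and> Adj m t}" by auto
        finally show "(\<Sum>m\<in>{m\<in>X. Adj y m}. if Adj m t then g t else 0) = of_nat (card {m\<in>X. Adj y m \<and> Adj m t}) * g t"
          by simp
      qed
      finally show ?thesis .
    qed
    moreover have "(\<Sum>t\<in>X. of_nat (card {m\<in>X. Adj y m \<and> Adj m t}) * g t) =
        (\<Sum>t\<in>X. if d x t = 3 \<and> d y t = 2 then of_nat (c 2) * w t else 0)"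
    proof (intro sum.cong refl)
      fix t assume tX: "t \<in> X"
      show "of_nat (card {m\<in>X. Adj y m \<and> Adj m t}) * g t = (if d x t = 3 \<and> d y t = 2 then of_nat (c 2) * w t else 0)"
      proof (cases "d x t = 3")
        case True
        have "3 \<le> 1 + d y t" using d_tri[OF xX yX tX] y1 True by simp
        then have dyt: "d t y \<ge> 2" using d_sym[OF yX tX] by simp
        have "{m\<in>X. Adj y m \<and> Adj m t} = {m\<in>X. Adj y m \<and> d t m = 1}"
          using d1 tX adj_sym by auto
        then have "card {m\<in>X. Adj y m \<and> Adj m t} = (if d t y = 2 then cc 2 else 0)"
          using card_layer[OF yX tX, of 1] dyt by auto
        then show ?thesis unfolding g_def Emv_def using True tX d_sym[OF yX tX] by (simp add: cc_def)
      next
        case False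
        then show ?thesis unfolding g_def Emv_def by simp
      qed
    qed
    moreover have "(\<Sum>t\<in>X. if d x t = 3 \<and> d y t = 2 then of_nat (c 2) * w t else 0) =
        of_nat (c 2) * (\<Sum>t\<in>{t\<in>X. d x t = 3 \<and> d y t = 2}. w t)"
      using finX by (simp add: sum.inter_filter sum_distrib_left if_distrib cong: if_cong)
    moreover have "c 2 \<noteq> 0" using cpos_cc[of 2] unfolding cc_def by simp
    ultimately show ?thesis by simp
  qed
  have E1: "(\<Sum>t\<in>{t\<in>N. t \<noteq> v \<and> \<not> Adj v t}. w t) = 0" if vN: "v \<in> N" for v
  proof -
    have vX: "v \<in> X" and zv: "Adj z v" using vN unfolding N_def by auto
    define y where "y = ant v"
    have yX: "y \<in> X" using ant[OF vX] y_def by simp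
    have "d v x = 3" using G3[OF vX] zv d_sym[OF xX vX] by simp
    then have y1: "d x y = 1" using geo[OF vX xX] y_def by simp
    have "{t\<in>X. d x t = 3 \<and> d y t = 2} = {t\<in>N. t \<noteq> v \<and> \<not> Adj v t}"
    proof (intro set_eqI iffI)
      fix t assume "t \<in> {t\<in>X. d x t = 3 \<and> d y t = 2}"
      then have tX: "t \<in> X" and t3: "d x t = 3" and t2: "d y t = 2" by auto
      have zt: "Adj z t" using G3[OF tX] t3 by simp
      have "d v t + d t y = 4" using geo[OF vX tX] y_def by simp
      then have "d v t = 2" using t2 d_sym[OF yX tX] by simp
      then show "t \<in> {t\<in>N. t \<noteq> v \<and> \<not> Adj v t}" using loc_d[OF zX vX zv tX zt] tX zt unfolding N_def
        by (auto split: if_splits)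
    next
      fix t assume "t \<in> {t\<in>N. t \<noteq> v \<and> \<not> Adj v t}"
      then have tX: "t \<in> X" and zt: "Adj z t" and tv: "t \<noteq> v" "\<not> Adj v t" unfolding N_def by auto
      have "d v t = 2" using loc_d[OF zX vX zv tX zt] tv by simp
      moreover have "d v t + d t y = 4" using geo[OF vX tX] y_def by simp
      ultimately have "d y t = 2" using d_sym[OF yX tX] by simp
      then show "t \<in> {t\<in>X. d x t = 3 \<and> d y t = 2}" using G3[OF tX] zt tX by simp
    qed
    then show ?thesis using step1[OF yX y1] by simp
  qed
  define H where "H = (\<Sum>t\<in>N. w t)"
  define L where "L v = (\<Sum>t\<in>{t\<in>N. Adj v t}. w t)" for v
  have HL: "H = w v + L v" if vN: "v \<in> N" for v
  proof -
    have spl: "N = {v} \<union> {t\<in>N. Adj v t} \<union> {t\<in>N. t \<noteq> v \<and> \<not> Adj v t}" using vN by auto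
    have f2: "finite {t\<in>N. Adj v t}" "finite {t\<in>N. t \<noteq> v \<and> \<not> Adj v t}" using fN by auto
    have d1': "{v} \<inter> {t\<in>N. Adj v t} = {}" using adj_irr by auto
    have d2': "({v} \<union> {t\<in>N. Adj v t}) \<inter> {t\<in>N. t \<noteq> v \<and> \<not> Adj v t} = {}" by auto
    have "(\<Sum>t\<in>N. w t) = (\<Sum>t\<in>{v} \<union> {t\<in>N. Adj v t}. w t) + (\<Sum>t\<in>{t\<in>N. t \<noteq> v \<and> \<not> Adj v t}. w t)"
      using sum.union_disjoint[OF _ f2(2) d2', of w] f2 spl by simp
    also have "(\<Sum>t\<in>{v} \<union> {t\<in>N. Adj v t}. w t) = w v + (\<Sum>t\<in>{t\<in>N. Adj v t}. w t)"
      using sum.union_disjoint[OF _ f2(1) d1', of w] by simp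
    finally have "H = w v + L v + (\<Sum>t\<in>{t\<in>N. t \<noteq> v \<and> \<not> Adj v t}. w t)"
      unfolding H_def L_def .
    then show ?thesis using E1[OF vN] by simp
  qed
  have a1N: "card {t\<in>N. Adj v t} = aa 1" if vN: "v \<in> N" for v
  proof -
    have vX: "v \<in> X" and zv: "Adj z v" using vN unfolding N_def by auto
    have "{t\<in>N. Adj v t} = {m\<in>X. Adj z m \<and> d v m = 1}" unfolding N_def using d1 vX by auto
    moreover have "d v z = 1" using d1 vX zX zv adj_sym by auto
    ultimately show ?thesis using card_layer[OF zX vX, of 1] by simp
  qed
  have key: "complex_of_real ((P + 1) * (Q - 1)) * (H - w v) = 0" if vN: "v \<in> N" for v
  proof -
    have vX: "v \<in> X" and zv: "Adj z v" using vN unfolding N_def by auto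
    have "(\<Sum>t\<in>{t\<in>N. Adj v t}. L t) = (\<Sum>t\<in>{t\<in>N. Adj v t}. H - w t)"
      using HL by (intro sum.cong refl) (auto simp: algebra_simps)
    also have "\<dots> = of_nat (aa 1) * H - L v"
      unfolding L_def using a1N[OF vN] by (simp add: sum_subtractf)
    finally have l1: "(\<Sum>t\<in>{t\<in>N. Adj v t}. L t) = of_nat (aa 1) * H - L v" .
    have "(\<Sum>t\<in>{t\<in>N. Adj v t}. L t) = (\<Sum>t\<in>{t\<in>N. Adj v t}. \<Sum>r\<in>N. if Adj t r then w r else 0)"
      unfolding L_def using fN by (simp add: sum.inter_filter)
    also have "\<dots> = (\<Sum>r\<in>N. \<Sum>t\<in>{t\<in>N. Adj v t}. if Adj t r then w r else 0)" by (rule sum.swap)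
    also have "\<dots> = (\<Sum>r\<in>N. of_nat (card {t\<in>N. Adj v t \<and> Adj t r}) * w r)"
    proof (intro sum.cong refl)
      fix r assume "r \<in> N"
      have "(\<Sum>t\<in>{t\<in>N. Adj v t}. if Adj t r then w r else 0) = (\<Sum>t\<in>{t\<in>{t\<in>N. Adj v t}. Adj t r}. w r)"
        using fN by (intro sum.inter_filter[symmetric]) auto
      also have "{t\<in>{t\<in>N. Adj v t}. Adj t r} = {t\<in>N. Adj v t \<and> Adj t r}" by auto
      finally show "(\<Sum>t\<in>{t\<in>N. Adj v t}. if Adj t r then w r else 0) = of_nat (card {t\<in>N. Adj v t \<and> Adj t r}) * w r"
        by simp
    qed
    also have "\<dots> = (\<Sum>r\<in>N. (of_real P + of_real (P - Q) * (if Adj v r then 1 else 0) + of_real (P * Q) * (if v = r then 1 else 0)) * w r)"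
    proof (intro sum.cong refl)
      fix r assume rN: "r \<in> N"
      have "real (card {t\<in>N. Adj v t \<and> Adj t r}) = P + (P - Q) * (if Adj v r then 1 else 0) + P * Q * (if v = r then 1 else 0)"
        using local_srg[OF zX vX zv, of r] rN unfolding N_def by auto
      then have "(of_nat (card {t\<in>N. Adj v t \<and> Adj t r}) :: complex) =
          of_real (P + (P - Q) * (if Adj v r then 1 else 0) + P * Q * (if v = r then 1 else 0))"
        by (metis of_real_of_nat_eq)
      then show "of_nat (card {t\<in>N. Adj v t \<and> Adj t r}) * w r = (of_real P + of_real (P - Q) * (if Adj v r then 1 else 0) + of_real (P * Q) * (if v = r then 1 else 0)) * w r"
        by simp
    qed
    also have "\<dots> = of_real P * H + of_real (P - Q) * L v + of_real (P * Q) * w v"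
    proof -
      have s1: "(\<Sum>r\<in>N. (if Adj v r then 1 else 0) * w r) = L v"
      proof -
        have "(\<Sum>r\<in>N. (if Adj v r then 1 else 0) * w r) = (\<Sum>r\<in>N. if Adj v r then w r else 0)"
          by (intro sum.cong refl) auto
        also have "\<dots> = L v" unfolding L_def using fN by (intro sum.inter_filter[symmetric]) auto
        finally show ?thesis .
      qed
      have s2: "(\<Sum>r\<in>N. (if v = r then 1 else 0) * w r) = w v"
      proof -
        have "(\<Sum>r\<in>N. (if v = r then 1 else 0) * w r) = (\<Sum>r\<in>N. if v = r then w r else 0)"
          by (intro sum.cong refl) auto
        also have "\<dots> = w v" using fN vN by (simp add: sum.delta)
        finally show ?thesis .
      qed
      show ?thesis unfolding H_def
        by (simp add: distrib_right sum.distrib sum_distrib_left[symmetric] mult.assoc s1 s2)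
    qed
    finally have l2: "(\<Sum>t\<in>{t\<in>N. Adj v t}. L t) = of_real P * H + of_real (P - Q) * L v + of_real (P * Q) * w v" .
    have Lv: "L v = H - w v" using HL[OF vN] by simp
    have aa1: "(of_nat (aa 1) :: complex) = of_real (P * (Q + 1))" using raa(2) by (metis of_real_of_nat_eq)
    from l1 l2 have "of_nat (aa 1) * H - L v = of_real P * H + of_real (P - Q) * L v + of_real (P * Q) * w v" by simp
    then show ?thesis unfolding Lv aa1 by (simp add: algebra_simps)
  qed
  have Hw: "w v = H" if "v \<in> N" for v
  proof -
    have "(P + 1) * (Q - 1) \<noteq> 0" using PQpos by simp
    then have nz: "complex_of_real ((P + 1) * (Q - 1)) \<noteq> 0" by (metis of_real_eq_0_iff)
    have "H - w v = 0" using key[OF that] nz by (simp only: mult_eq_0_iff) blast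
    then show ?thesis by simp
  qed
  have H0: "H = 0" if "v \<in> N" for v
  proof -
    have "L v = 0" using HL[OF that] Hw[OF that] by simp
    moreover have "L v = of_nat (aa 1) * H" unfolding L_def using Hw a1N[OF that] by simp
    moreover have "aa 1 \<noteq> 0"
    proof -
      have "real (aa 1) > 0" using raa(2) PQpos by simp
      then show ?thesis by auto
    qed
    ultimately show ?thesis by simp
  qed
  show "w t = 0" if "t \<in> X" "d x t = 3" for t
  proof -
    have "t \<in> N" using G3 that unfolding N_def by auto
    then show ?thesis using Hw H0 by simp
  qed
qed

lemma E4_vanish:
  assumes xX: "x \<in> X" and TM: "T_module X Adj x W"
    and V3: "\<And>w t. w \<in> W \<Longrightarrow> t \<in> X \<Longrightarrow> d x t = 3 \<Longrightarrow> w t = 0"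
    and wW: "w \<in> W" and tX: "t \<in> X" and t4: "d x t = 4"
  shows "w t = 0"
proof -
  have tz: "t = ant x" using ant_uniq[OF xX tX t4] .
  have "card {m\<in>X. Adj t m} \<ge> 1" using card_nbr[OF tX] bpos[of 0] by simp
  then have "{m\<in>X. Adj t m} \<noteq> {}" by (intro notI) simp
  then obtain v where vX: "v \<in> X" and tv: "Adj t v" by auto
  have "d t v = 1" using d1 tX vX tv by simp
  then have v3: "d x v = 3" using geo[OF xX vX] tz d_sym[OF vX tX] by simp
  define h where "h = Emv x 4 w"
  have "Amv h \<in> W" using Tmod_A[OF TM] Tmod_E[OF TM] wW unfolding h_def by simp
  then have "Amv h v = 0" using V3 vX v3 by simp
  moreover have "Amv h v = (\<Sum>m\<in>{m\<in>X. Adj v m}. if d x m = 4 then w m else 0)"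
    unfolding Amv_def h_def Emv_def using vX by (auto intro!: sum.cong)
  moreover have "(\<Sum>m\<in>{m\<in>X. Adj v m}. if d x m = 4 then w m else 0) = (\<Sum>m\<in>{m\<in>X. Adj v m}. if m = t then w t else 0)"
  proof (intro sum.cong refl)
    fix m assume "m \<in> {m\<in>X. Adj v m}"
    then have mX: "m \<in> X" by auto
    have "d x m = 4 \<longleftrightarrow> m = t"
    proof
      assume "d x m = 4" then show "m = t" using ant_uniq[OF xX mX] tz by simp
    next
      assume "m = t" then show "d x m = 4" using t4 by simp
    qed
    then show "(if d x m = 4 then w m else 0) = (if m = t then w t else 0)" by simp
  qed
  moreover have "(\<Sum>m\<in>{m\<in>X. Adj v m}. if m = t then w t else 0) = w t"
  proof -
    have "t \<in> {m\<in>X. Adj v m}" using tX tv adj_sym by auto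
    then show ?thesis using sum.delta[OF fin_S[of "\<lambda>m. Adj v m"], of t "\<lambda>_. w t"] by simp
  qed
  ultimately show ?thesis by simp
qed

definition Tm :: "(nat \<Rightarrow> real) \<Rightarrow> nat \<Rightarrow> real" where
  "Tm \<beta> j = (if 1 \<le> j then \<beta> (j-1) * real (cc j) else 0) + \<beta> j * real (aa j)
     + (if j < 4 then \<beta> (j+1) * real (bb j) else 0)"

definition tau :: "nat \<Rightarrow> real" where
  "tau j = (if j = 0 then Q * S else if j = 1 then S else if j = 2 then P else if j = 3 then -Q else -(Q^2))"

lemma rbb1: "real (bb (Suc 0)) = (Q^2 - 1) * (P + 1)" using rbb(2) by simp
lemma rcc1: "real (cc (Suc 0)) = 1" "cc (Suc 0) = 1" using rcc(2) by simp_all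
lemma raa1: "real (aa (Suc 0)) = P * (Q + 1)" using raa(2) by simp

definition B0 :: "nat \<Rightarrow> real" where "B0 i = (if i = 0 then (1) else if i = 1 then 0 else if i = 2 then 0 else if i = 3 then 0 else if i = 4 then 0 else 0)"

definition B1 :: "nat \<Rightarrow> real" where "B1 i = (if i = 0 then (-1*Q*Q) + (-1*P*Q) + (-1*P*Q*Q) else if i = 1 then (1) else if i = 2 then 0 else if i = 3 then 0 else if i = 4 then 0 else 0)"

definition B2 :: "nat \<Rightarrow> real" where "B2 i = (if i = 0 then (1*Q*Q) + (1*Q*Q*Q) + (1*P*Q) + (3*P*Q*Q) + (2*P*Q*Q*Q) + (1*P*P*Q) + (2*P*P*Q*Q) + (1*P*P*Q*Q*Q) else if i = 1 then (-1*Q) + (-1*Q*Q) + (-1*P*Q) + (-1*P*Q*Q) else if i = 2 then ((1/2)*Q*Q) + ((1/2)*P*Q) else if i = 3 then 0 else if i = 4 then 0 else 0)"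

definition B3 :: "nat \<Rightarrow> real" where "B3 i = (if i = 0 then (-1*Q*Q*Q) + (-1*Q*Q*Q*Q) + (-2*P*Q*Q) + (-4*P*Q*Q*Q) + (-2*P*Q*Q*Q*Q) + (-1*P*P*Q) + (-4*P*P*Q*Q) + (-4*P*P*Q*Q*Q) + (-1*P*P*Q*Q*Q*Q) + (-1*P*P*P*Q) + (-2*P*P*P*Q*Q) + (-1*P*P*P*Q*Q*Q) else if i = 1 then ((1/2)*Q*Q) + (1*Q*Q*Q) + ((1/2)*Q*Q*Q*Q) + ((1/2)*P*Q) + ((3/2)*P*Q*Q) + ((3/2)*P*Q*Q*Q) + ((1/2)*P*Q*Q*Q*Q) + ((1/2)*P*P*Q) + (1*P*P*Q*Q) + ((1/2)*P*P*Q*Q*Q) else if i = 2 then ((-1/2)*Q*Q*Q) + ((-1/2)*Q*Q*Q*Q) + (-1*P*Q*Q) + (-1*P*Q*Q*Q) + ((-1/2)*P*P*Q) + ((-1/2)*P*P*Q*Q) else if i = 3 then ((-1/2)*Q*Q) + ((1/2)*Q*Q*Q*Q) + ((-1/2)*P*Q) + ((-1/2)*P*Q*Q) + ((1/2)*P*Q*Q*Q) + ((1/2)*P*Q*Q*Q*Q) + ((-1/2)*P*P*Q) + ((1/2)*P*P*Q*Q*Q) else if i = 4 then 0 else 0)"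

definition B4 :: "nat \<Rightarrow> real" where "B4 i = (if i = 0 then ((-1/2)*Q*Q*Q*Q) + ((1/2)*Q*Q*Q*Q*Q*Q) + (-1*P*Q*Q*Q) + (-1*P*Q*Q*Q*Q) + (1*P*Q*Q*Q*Q*Q) + (1*P*Q*Q*Q*Q*Q*Q) + ((-1/2)*P*P*Q*Q) + ((-3/2)*P*P*Q*Q*Q) + ((3/2)*P*P*Q*Q*Q*Q*Q) + ((1/2)*P*P*Q*Q*Q*Q*Q*Q) + ((-1/2)*P*P*P*Q*Q) + ((-1/2)*P*P*P*Q*Q*Q) + ((1/2)*P*P*P*Q*Q*Q*Q) + ((1/2)*P*P*P*Q*Q*Q*Q*Q) else if i = 1 then ((1/2)*Q*Q*Q*Q) + ((-1/2)*Q*Q*Q*Q*Q*Q) + ((1/2)*P*Q*Q*Q) + ((1/2)*P*Q*Q*Q*Q) + ((-1/2)*P*Q*Q*Q*Q*Q) + ((-1/2)*P*Q*Q*Q*Q*Q*Q) + ((1/2)*P*P*Q*Q*Q) + ((-1/2)*P*P*Q*Q*Q*Q*Q) else if i = 2 then ((-1/2)*Q*Q*Q*Q) + ((1/2)*Q*Q*Q*Q*Q*Q) + (-1*P*Q*Q*Q) + (1*P*Q*Q*Q*Q*Q) + ((-1/2)*P*P*Q*Q) + ((1/2)*P*P*Q*Q*Q*Q) else if i = 3 then ((1/2)*Q*Q*Q*Q) + ((-1/2)*Q*Q*Q*Q*Q*Q) + ((1/2)*P*Q*Q*Q) + ((1/2)*P*Q*Q*Q*Q) + ((-1/2)*P*Q*Q*Q*Q*Q)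 + ((-1/2)*P*Q*Q*Q*Q*Q*Q) + ((1/2)*P*P*Q*Q*Q) + ((-1/2)*P*P*Q*Q*Q*Q*Q) else if i = 4 then ((-1/2)*Q*Q*Q*Q) + ((1/2)*Q*Q*Q*Q*Q*Q) + (-1*P*Q*Q*Q) + (-1*P*Q*Q*Q*Q) + (1*P*Q*Q*Q*Q*Q) + (1*P*Q*Q*Q*Q*Q*Q) + ((-1/2)*P*P*Q*Q) + ((-3/2)*P*P*Q*Q*Q) + ((3/2)*P*P*Q*Q*Q*Q*Q) + ((1/2)*P*P*Q*Q*Q*Q*Q*Q) + ((-1/2)*P*P*P*Q*Q) + ((-1/2)*P*P*P*Q*Q*Q) + ((1/2)*P*P*P*Q*Q*Q*Q) + ((1/2)*P*P*P*Q*Q*Q*Q*Q) else 0)"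

definition B5 :: "nat \<Rightarrow> real" where "B5 i = (if i = 0 then 0 else if i = 1 then 0 else if i = 2 then 0 else if i = 3 then 0 else if i = 4 then 0 else 0)"

lemma B1_0: "B1 0 = Tm B0 0 - tau 0 * B0 0"
  unfolding Tm_def by (simp add: B0_def B1_def tau_def rbb rcc raa rbb1 rcc1 raa1) (simp add: field_simps power2_eq_square)?

lemma B1_1: "B1 1 = Tm B0 1 - tau 0 * B0 1"
  unfolding Tm_def by (simp add: B0_def B1_def tau_def rbb rcc raa rbb1 rcc1 raa1) (simp add: field_simps power2_eq_square)?

lemma B1_2: "B1 2 = Tm B0 2 - tau 0 * B0 2"
  unfolding Tm_def by (simp add: B0_def B1_def tau_def rbb rcc raa rbb1 rcc1 raa1) (simp add: field_simps power2_eq_square)?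

lemma B1_3: "B1 3 = Tm B0 3 - tau 0 * B0 3"
  unfolding Tm_def by (simp add: B0_def B1_def tau_def rbb rcc raa rbb1 rcc1 raa1) (simp add: field_simps power2_eq_square)?

lemma B1_4: "B1 4 = Tm B0 4 - tau 0 * B0 4"
  unfolding Tm_def by (simp add: B0_def B1_def tau_def rbb rcc raa rbb1 rcc1 raa1) (simp add: field_simps power2_eq_square)?

lemma B2_0: "B2 0 = Tm B1 0 - tau 1 * B1 0"
  unfolding Tm_def by (simp add: B1_def B2_def tau_def rbb rcc raa rbb1 rcc1 raa1) (simp add: field_simps power2_eq_square)?

lemma B2_1: "B2 1 = Tm B1 1 - tau 1 * B1 1"
  unfolding Tm_def by (simp add: B1_def B2_def tau_def rbb rcc raa rbb1 rcc1 raa1) (simp add: field_simps power2_eq_square)?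

lemma B2_2: "B2 2 = Tm B1 2 - tau 1 * B1 2"
  unfolding Tm_def by (simp add: B1_def B2_def tau_def rbb rcc raa rbb1 rcc1 raa1) (simp add: field_simps power2_eq_square)?

lemma B2_3: "B2 3 = Tm B1 3 - tau 1 * B1 3"
  unfolding Tm_def by (simp add: B1_def B2_def tau_def rbb rcc raa rbb1 rcc1 raa1) (simp add: field_simps power2_eq_square)?

lemma B2_4: "B2 4 = Tm B1 4 - tau 1 * B1 4"
  unfolding Tm_def by (simp add: B1_def B2_def tau_def rbb rcc raa rbb1 rcc1 raa1) (simp add: field_simps power2_eq_square)?

lemma B3_0: "B3 0 = Tm B2 0 - tau 2 * B2 0"
  unfolding Tm_def by (simp add: B2_def B3_def tau_def rbb rcc raa rbb1 rcc1 raa1) (simp add: field_simps power2_eq_square)?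

lemma B3_1: "B3 1 = Tm B2 1 - tau 2 * B2 1"
  unfolding Tm_def by (simp add: B2_def B3_def tau_def rbb rcc raa rbb1 rcc1 raa1) (simp add: field_simps power2_eq_square)?

lemma B3_2: "B3 2 = Tm B2 2 - tau 2 * B2 2"
  unfolding Tm_def by (simp add: B2_def B3_def tau_def rbb rcc raa rbb1 rcc1 raa1) (simp add: field_simps power2_eq_square)?

lemma B3_3: "B3 3 = Tm B2 3 - tau 2 * B2 3"
  unfolding Tm_def by (simp add: B2_def B3_def tau_def rbb rcc raa rbb1 rcc1 raa1) (simp add: field_simps power2_eq_square)?

lemma B3_4: "B3 4 = Tm B2 4 - tau 2 * B2 4"
  unfolding Tm_def by (simp add: B2_def B3_def tau_def rbb rcc raa rbb1 rcc1 raa1) (simp add: field_simps power2_eq_square)?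

lemma B4_0: "B4 0 = Tm B3 0 - tau 3 * B3 0"
  unfolding Tm_def by (simp add: B3_def B4_def tau_def rbb rcc raa rbb1 rcc1 raa1) (simp add: field_simps power2_eq_square)?

lemma B4_1: "B4 1 = Tm B3 1 - tau 3 * B3 1"
  unfolding Tm_def by (simp add: B3_def B4_def tau_def rbb rcc raa rbb1 rcc1 raa1) (simp add: field_simps power2_eq_square)?

lemma B4_2: "B4 2 = Tm B3 2 - tau 3 * B3 2"
  unfolding Tm_def by (simp add: B3_def B4_def tau_def rbb rcc raa rbb1 rcc1 raa1) (simp add: field_simps power2_eq_square)?

lemma B4_3: "B4 3 = Tm B3 3 - tau 3 * B3 3"
  unfolding Tm_def by (simp add: B3_def B4_def tau_def rbb rcc raa rbb1 rcc1 raa1) (simp add: field_simps power2_eq_square)?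

lemma B4_4: "B4 4 = Tm B3 4 - tau 3 * B3 4"
  unfolding Tm_def by (simp add: B3_def B4_def tau_def rbb rcc raa rbb1 rcc1 raa1) (simp add: field_simps power2_eq_square)?

lemma B5_0: "B5 0 = Tm B4 0 - tau 4 * B4 0"
  unfolding Tm_def by (simp add: B4_def B5_def tau_def rbb rcc raa rbb1 rcc1 raa1) (simp add: field_simps power2_eq_square)?

lemma B5_1: "B5 1 = Tm B4 1 - tau 4 * B4 1"
  unfolding Tm_def by (simp add: B4_def B5_def tau_def rbb rcc raa rbb1 rcc1 raa1) (simp add: field_simps power2_eq_square)?

lemma B5_2: "B5 2 = Tm B4 2 - tau 4 * B4 2"
  unfolding Tm_def by (simp add: B4_def B5_def tau_def rbb rcc raa rbb1 rcc1 raa1) (simp add: field_simps power2_eq_square)?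

lemma B5_3: "B5 3 = Tm B4 3 - tau 4 * B4 3"
  unfolding Tm_def by (simp add: B4_def B5_def tau_def rbb rcc raa rbb1 rcc1 raa1) (simp add: field_simps power2_eq_square)?

lemma B5_4: "B5 4 = Tm B4 4 - tau 4 * B4 4"
  unfolding Tm_def by (simp add: B4_def B5_def tau_def rbb rcc raa rbb1 rcc1 raa1) (simp add: field_simps power2_eq_square)?

definition Bsel :: "nat \<Rightarrow> nat \<Rightarrow> real" where
  "Bsel j = (if j = 0 then B0 else if j = 1 then B1 else if j = 2 then B2 else if j = 3 then B3 else if j = 4 then B4 else B5)"

lemma Bstep: assumes "j < 5" "i \<le> 4" shows "Bsel (Suc j) i = Tm (Bsel j) i - tau j * Bsel j i"
proof -
  have "j = 0 \<or> j = 1 \<or> j = 2 \<or> j = 3 \<or> j = 4" using assms by auto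
  moreover have "i = 0 \<or> i = 1 \<or> i = 2 \<or> i = 3 \<or> i = 4" using assms by auto
  ultimately show ?thesis unfolding Bsel_def
    using B1_0 B1_1 B1_2 B1_3 B1_4 B2_0 B2_1 B2_2 B2_3 B2_4 B3_0 B3_1 B3_2 B3_3 B3_4
      B4_0 B4_1 B4_2 B4_3 B4_4 B5_0 B5_1 B5_2 B5_3 B5_4
    by (elim disjE) simp_all
qed

lemma B5z: "Bsel 5 i = 0" unfolding Bsel_def B5_def by simp

definition Dop :: "nat \<Rightarrow> ('a \<Rightarrow> complex) \<Rightarrow> ('a \<Rightarrow> complex)" where
  "Dop i w = (\<lambda>u. if u \<in> X then (\<Sum>m'\<in>{m'\<in>X. d u m' = i}. w m') else 0)"

lemma A_Dop: assumes uX: "u \<in> X"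
  shows "Amv (Dop i w) u = of_nat (cc (i+1)) * Dop (i+1) w u + of_nat (aa i) * Dop i w u
     + (if 1 \<le> i then of_nat (bb (i-1)) * Dop (i-1) w u else 0)"
proof -
  have "Amv (Dop i w) u = (\<Sum>m\<in>{m\<in>X. Adj u m}. \<Sum>m'\<in>{m'\<in>X. d m m' = i}. w m')"
    unfolding Amv_def Dop_def using uX by (auto intro!: sum.cong)
  also have "\<dots> = of_nat (cc (i+1)) * Dop (i+1) w u + of_nat (aa i) * Dop i w u
     + (if 1 \<le> i then of_nat (bb (i-1)) * Dop (i-1) w u else 0)"
    unfolding rec_sum[OF uX] Dop_def using uX by simp
  finally show ?thesis .
qed

definition Vc :: "(nat \<Rightarrow> real) \<Rightarrow> ('a \<Rightarrow> complex) \<Rightarrow> ('a \<Rightarrow> complex)" where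
  "Vc \<beta> w = (\<lambda>u. \<Sum>i\<le>4. of_real (\<beta> i) * Dop i w u)"

lemma A_Vc: "Amv (Vc \<beta> w) = Vc (Tm \<beta>) w"
proof (rule ext)
  fix u
  show "Amv (Vc \<beta> w) u = Vc (Tm \<beta>) w u"
  proof (cases "u \<in> X")
    case False
    then show ?thesis unfolding Amv_def Vc_def Dop_def by simp
  next
    case uX: True
    have "Amv (Vc \<beta> w) u = (\<Sum>m\<in>{m\<in>X. Adj u m}. \<Sum>i\<le>4. of_real (\<beta> i) * Dop i w m)"
      unfolding Amv_def Vc_def using uX by simp
    also have "\<dots> = (\<Sum>i\<le>4. of_real (\<beta> i) * (\<Sum>m\<in>{m\<in>X. Adj u m}. Dop i w m))"
      by (subst sum.swap) (simp add: sum_distrib_left)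
    also have "\<dots> = (\<Sum>i\<le>4. of_real (\<beta> i) * Amv (Dop i w) u)"
      unfolding Amv_def using uX by simp
    also have "\<dots> = Vc (Tm \<beta>) w u"
    proof -
      have e: "{..4::nat} = {0,1,2,3,4}" by auto
      have c5: "cc 5 = 0" unfolding cc_def by simp
      have s4: "(\<Sum>i\<le>4. f i) = f 0 + f 1 + f 2 + f 3 + f (4::nat)" for f :: "nat \<Rightarrow> complex"
        unfolding e by simp
      have h0: "Amv (Dop 0 w) u = of_nat (cc 1) * Dop 1 w u + of_nat (aa 0) * Dop 0 w u"
        using A_Dop[OF uX, of 0] by simp
      have h1: "Amv (Dop 1 w) u = of_nat (cc 2) * Dop 2 w u + of_nat (aa 1) * Dop 1 w u + of_nat (bb 0) * Dop 0 w u"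
        using A_Dop[OF uX, of 1] by (simp add: numeral_2_eq_2)
      have h2: "Amv (Dop 2 w) u = of_nat (cc 3) * Dop 3 w u + of_nat (aa 2) * Dop 2 w u + of_nat (bb 1) * Dop 1 w u"
        using A_Dop[OF uX, of 2] by simp
      have h3: "Amv (Dop 3 w) u = of_nat (cc 4) * Dop 4 w u + of_nat (aa 3) * Dop 3 w u + of_nat (bb 2) * Dop 2 w u"
        using A_Dop[OF uX, of 3] by simp
      have h4: "Amv (Dop 4 w) u = of_nat (aa 4) * Dop 4 w u + of_nat (bb 3) * Dop 3 w u"
        using A_Dop[OF uX, of 4] c5 by simp
      have t0: "Tm \<beta> 0 = \<beta> 0 * real (aa 0) + \<beta> 1 * real (bb 0)" unfolding Tm_def by simp
      have t1: "Tm \<beta> 1 = \<beta> 0 * real (cc 1) + \<beta> 1 * real (aa 1) + \<beta> 2 * real (bb 1)" unfolding Tm_def by (simp add: numeral_2_eq_2)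
      have t2: "Tm \<beta> 2 = \<beta> 1 * real (cc 2) + \<beta> 2 * real (aa 2) + \<beta> 3 * real (bb 2)" unfolding Tm_def by simp
      have t3: "Tm \<beta> 3 = \<beta> 2 * real (cc 3) + \<beta> 3 * real (aa 3) + \<beta> 4 * real (bb 3)" unfolding Tm_def by simp
      have t4: "Tm \<beta> 4 = \<beta> 3 * real (cc 4) + \<beta> 4 * real (aa 4)" unfolding Tm_def by simp
      show ?thesis unfolding Vc_def s4 h0 h1 h2 h3 h4 t0 t1 t2 t3 t4
        by (simp add: algebra_simps)
    qed
    finally show ?thesis .
  qed
qed

fun vv :: "nat \<Rightarrow> ('a \<Rightarrow> complex) \<Rightarrow> ('a \<Rightarrow> complex)" where
  "vv 0 w = w"
| "vv (Suc j) w = (\<lambda>u. Amv (vv j w) u - of_real (tau j) * vv j w u)"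

lemma Dop0: assumes "\<And>y. y \<notin> X \<Longrightarrow> w y = 0" shows "Dop 0 w = w"
proof (rule ext)
  fix u show "Dop 0 w u = w u"
  proof (cases "u \<in> X")
    case True
    then have "{m'\<in>X. d u m' = 0} = {u}" using d0 by auto
    then show ?thesis unfolding Dop_def using True by simp
  qed (use assms in \<open>simp add: Dop_def\<close>)
qed

lemma vv_Vc: assumes wV: "\<And>y. y \<notin> X \<Longrightarrow> w y = 0"
  shows "j \<le> 5 \<Longrightarrow> vv j w = Vc (Bsel j) w"
proof (induction j)
  case 0
  have "Vc (Bsel 0) w = (\<lambda>u. \<Sum>i\<le>4. of_real (if i = 0 then 1 else 0) * Dop i w u)"
    unfolding Vc_def Bsel_def B0_def by (intro ext sum.cong refl) auto
  also have "\<dots> = Dop 0 w"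
  proof (rule ext)
    fix u
    have e: "{..4::nat} = {0,1,2,3,4}" by auto
    show "(\<Sum>i\<le>4. of_real (if i = 0 then 1 else 0) * Dop i w u) = Dop 0 w u" unfolding e by simp
  qed
  finally show ?case using Dop0[OF wV] by simp
next
  case (Suc j)
  then have IH: "vv j w = Vc (Bsel j) w" by simp
  have "vv (Suc j) w = (\<lambda>u. Vc (Tm (Bsel j)) w u - of_real (tau j) * Vc (Bsel j) w u)"
    using IH A_Vc by simp
  also have "\<dots> = Vc (Bsel (Suc j)) w"
  proof (rule ext)
    fix u
    have "Vc (Tm (Bsel j)) w u - of_real (tau j) * Vc (Bsel j) w u =
        (\<Sum>i\<le>4. of_real (Tm (Bsel j) i - tau j * Bsel j i) * Dop i w u)"
      unfolding Vc_def by (simp add: sum_distrib_left sum_subtractf[symmetric] algebra_simps)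
    also have "\<dots> = Vc (Bsel (Suc j)) w u"
      unfolding Vc_def using Bstep Suc.prems by (intro sum.cong refl) auto
    finally show "Vc (Tm (Bsel j)) w u - of_real (tau j) * Vc (Bsel j) w u = Vc (Bsel (Suc j)) w u" .
  qed
  finally show ?case .
qed

lemma vv5: assumes "\<And>y. y \<notin> X \<Longrightarrow> w y = 0" shows "vv 5 w = (\<lambda>_. 0)"
proof -
  have "vv 5 w = Vc (Bsel 5) w" by (rule vv_Vc) (use assms in auto)
  then show ?thesis unfolding Vc_def B5z by simp
qed

lemma vv_W: "T_module X Adj x W \<Longrightarrow> w \<in> W \<Longrightarrow> vv j w \<in> W"
proof (induction j)
  case (Suc j)
  then have "vv j w \<in> W" by simp
  then have a: "Amv (vv j w) \<in> W" "(\<lambda>u. (- of_real (tau j)) * vv j w u) \<in> W"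
    using Tmod_A[OF Suc.prems(1)] Tmod_smult[OF Suc.prems(1)] by blast+
  have "vv (Suc j) w = (\<lambda>y. Amv (vv j w) y + (- of_real (tau j)) * vv j w y)" by (rule ext) simp
  then show ?case using Tmod_add[OF Suc.prems(1) a] by simp
qed simp

lemma eigen_ex:
  assumes TM: "T_module X Adj x W" and wW: "w \<in> W" and w0: "w \<noteq> (\<lambda>_. 0)"
  shows "\<exists>v\<in>W. v \<noteq> (\<lambda>_. 0) \<and> (\<exists>ev. Amv v = (\<lambda>u. ev * v u))"
proof -
  have wV: "\<And>y. y \<notin> X \<Longrightarrow> w y = 0" using Tmod_V[OF TM wW] .
  have "\<exists>j<5. vv j w \<noteq> (\<lambda>_. 0) \<and> vv (Suc j) w = (\<lambda>_. 0)"
  proof (rule ccontr)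
    assume "\<not> ?thesis"
    then have H: "\<And>j. j < 5 \<Longrightarrow> vv j w \<noteq> (\<lambda>_. 0) \<Longrightarrow> vv (Suc j) w \<noteq> (\<lambda>_. 0)" by blast
    have "j \<le> 5 \<Longrightarrow> vv j w \<noteq> (\<lambda>_. 0)" for j
    proof (induction j)
      case 0 then show ?case using w0 by simp
    next
      case (Suc j) then show ?case using H[of j] by simp
    qed
    moreover have "vv 5 w = (\<lambda>_. 0)" by (rule vv5) (use wV in auto)
    ultimately show False by auto
  qed
  then obtain j where j: "vv j w \<noteq> (\<lambda>_. 0)" "vv (Suc j) w = (\<lambda>_. 0)" by blast
  have "Amv (vv j w) = (\<lambda>u. of_real (tau j) * vv j w u)"
  proof (rule ext)
    fix u
    have "vv (Suc j) w u = 0" using j(2) by simp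
    then show "Amv (vv j w) u = of_real (tau j) * vv j w u" by simp
  qed
  then show ?thesis using j(1) vv_W[OF TM wW] by blast
qed

end

lemma mv_lin: "mat_vec X M (\<lambda>y. a * f y) = (\<lambda>y. a * mat_vec X M f y)"
  unfolding mat_vec_def by (simp add: sum_distrib_left algebra_simps)

lemma mv_mult: "finite X \<Longrightarrow> mat_vec X (mat_mult X M N) f = mat_vec X M (mat_vec X N f)"
proof (rule ext)
  fix y assume fX: "finite X"
  have "mat_vec X (mat_mult X M N) f y = (\<Sum>z\<in>X. \<Sum>w\<in>X. M y w * N w z * f z)"
    unfolding mat_vec_def mat_mult_def by (simp add: sum_distrib_right)
  also have "\<dots> = (\<Sum>w\<in>X. \<Sum>z\<in>X. M y w * N w z * f z)" by (rule sum.swap)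
  also have "\<dots> = mat_vec X M (mat_vec X N f) y"
    unfolding mat_vec_def by (simp add: sum_distrib_left mult.assoc)
  finally show "mat_vec X (mat_mult X M N) f y = mat_vec X M (mat_vec X N f) y" .
qed

theorem lemma8p3:
  fixes X :: "'a set" and Adj :: "'a \<Rightarrow> 'a \<Rightarrow> bool" and p q :: nat
    and x :: 'a and W :: "('a \<Rightarrow> complex) set"
  assumes "AT4 X Adj p q"
    and "x \<in> X"
    and "irreducible_T_module X Adj x W"
    and "endpoint X Adj x W = 2"
  shows "module_diameter X Adj x W = 0 \<and> thin X Adj x W"
proof -
  obtain b c where A: "1 \<le> p" "2 \<le> q" "antipodal_double_cover X Adj 4" "distance_regular X Adj 4 b c"
    "b 0 = q * (p*q + p + q)" "b 1 = (q^2 - 1) * (p + 1)" "2 * b 2 = q * (p + q)" "b 3 = 1"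
    "c 1 = 1" "2 * c 2 = q * (p + q)" "c 3 = (q^2 - 1) * (p + 1)" "c 4 = q * (p*q + p + q)"
    using assms(1) unfolding AT4_def by blast
  interpret G: at4g X Adj p q b c
    using A by unfold_locales auto
  have xX: "x \<in> X" by (rule assms(2))
  have TM: "T_module X Adj x W" and Wne: "W \<noteq> {\<lambda>_. 0}"
    and irr: "\<And>U. T_module X Adj x U \<Longrightarrow> U \<subseteq> W \<Longrightarrow> U = {\<lambda>_. 0} \<or> U = W"
    using assms(3) unfolding irreducible_T_module_def by auto
  have W0: "(\<lambda>_. 0) \<in> W" using TM unfolding T_module_def csubspace_of_def by auto
  obtain w0 where w0W: "w0 \<in> W" and w0nz: "w0 \<noteq> (\<lambda>_. 0)" using Wne W0 by blast
  define supp where "supp = support_idx X Adj x W"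
  have EWi: "EW X Adj x i W = G.Emv x i ` W" for i
    unfolding EW_def G.Emv_def G.mv_E by simp
  have supp_iff: "i \<in> supp \<longleftrightarrow> i \<le> 4 \<and> (\<exists>w\<in>W. G.Emv x i w \<noteq> (\<lambda>_. 0))" for i
  proof -
    have "G.Emv x i (\<lambda>_. 0) = (\<lambda>_. 0)" unfolding G.Emv_def by simp
    then have "EW X Adj x i W \<noteq> {\<lambda>_. 0} \<longleftrightarrow> (\<exists>w\<in>W. G.Emv x i w \<noteq> (\<lambda>_. 0))"
    proof -
      assume z: "G.Emv x i (\<lambda>_. 0) = (\<lambda>_. 0)"
      show ?thesis
      proof
        assume neq: "EW X Adj x i W \<noteq> {\<lambda>_. 0}"
        show "\<exists>w\<in>W. G.Emv x i w \<noteq> (\<lambda>_. 0)"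
        proof (rule ccontr)
          assume "\<not> (\<exists>w\<in>W. G.Emv x i w \<noteq> (\<lambda>_. 0))"
          then have all0: "\<forall>w\<in>W. G.Emv x i w = (\<lambda>_. 0)" by blast
          have "G.Emv x i ` W = {\<lambda>_. 0}"
          proof
            show "G.Emv x i ` W \<subseteq> {\<lambda>_. 0}" using all0 by auto
            show "{\<lambda>_. 0} \<subseteq> G.Emv x i ` W" using W0 z by (auto intro: image_eqI[of _ _ "\<lambda>_. 0"])
          qed
          then show False using neq unfolding EWi by simp
        qed
      next
        assume "\<exists>w\<in>W. G.Emv x i w \<noteq> (\<lambda>_. 0)"
        then obtain w where "w \<in> W" "G.Emv x i w \<noteq> (\<lambda>_. 0)" by blast
        then have "G.Emv x i w \<in> EW X Adj x i W" "G.Emv x i w \<noteq> (\<lambda>_. 0)" unfolding EWi by auto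
        then show "EW X Adj x i W \<noteq> {\<lambda>_. 0}" by auto
      qed
    qed
    then show ?thesis unfolding supp_def support_idx_def by simp
  qed
  have fin: "finite supp" unfolding supp_def support_idx_def by simp
  have ne: "supp \<noteq> {}"
  proof -
    obtain y where "w0 y \<noteq> 0" using w0nz by auto
    moreover have yX: "y \<in> X" using G.Tmod_V[OF TM w0W] calculation by auto
    ultimately have "G.Emv x (gdist X Adj x y) w0 y \<noteq> 0" unfolding G.Emv_def by simp
    then have "G.Emv x (gdist X Adj x y) w0 \<noteq> (\<lambda>_. 0)" by auto
    moreover have "gdist X Adj x y \<le> 4" using G.diam[OF xX yX] .
    ultimately have "gdist X Adj x y \<in> supp" using supp_iff w0W by blast
    then show ?thesis by auto
  qed
  have minsupp: "Min supp = 2" using assms(4) unfolding endpoint_def supp_def by simp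
  have two: "2 \<in> supp" using Min_in[OF fin ne] minsupp by simp
  have ge2: "i \<in> supp \<Longrightarrow> 2 \<le> i" for i using Min_le[OF fin] minsupp by fastforce
  have van: "w y = 0" if "i \<le> 4" "i \<notin> supp" "w \<in> W" "y \<in> X" "gdist X Adj x y = i" for i w y
  proof -
    have "G.Emv x i w = (\<lambda>_. 0)" using supp_iff that by blast
    then have "G.Emv x i w y = 0" by simp
    then show ?thesis unfolding G.Emv_def using that by simp
  qed
  have V01: "\<And>w y. w \<in> W \<Longrightarrow> y \<in> X \<Longrightarrow> gdist X Adj x y \<le> 1 \<Longrightarrow> w y = 0"
  proof -
    fix w y assume a: "w \<in> W" "y \<in> X" "gdist X Adj x y \<le> 1"
    then have "gdist X Adj x y \<notin> supp" using ge2 by fastforce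
    then show "w y = 0" using van[OF _ _ a(1) a(2) refl] a(3) by simp
  qed
  have V3: "\<And>w t. w \<in> W \<Longrightarrow> t \<in> X \<Longrightarrow> gdist X Adj x t = 3 \<Longrightarrow> w t = 0"
  proof -
    fix w t assume a: "w \<in> W" "t \<in> X" "gdist X Adj x t = 3"
    show "w t = 0"
      by (rule G.E3_vanish[of x W w t]) (fact xX, fact TM, erule V01, assumption+, fact a(1), fact a(2), fact a(3))
  qed
  have V4: "\<And>w t. w \<in> W \<Longrightarrow> t \<in> X \<Longrightarrow> gdist X Adj x t = 4 \<Longrightarrow> w t = 0"
  proof -
    fix w t assume a: "w \<in> W" "t \<in> X" "gdist X Adj x t = 4"
    show "w t = 0"
      by (rule G.E4_vanish[of x W w t]) (fact xX, fact TM, erule V3, assumption+, fact a(1), fact a(2), fact a(3))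
  qed
  have supp2: "supp = {2}"
  proof
    show "{2} \<subseteq> supp" using two by simp
    show "supp \<subseteq> {2}"
    proof
      fix i assume i: "i \<in> supp"
      have "i \<le> 4" using supp_iff i by simp
      moreover have "i \<noteq> 3"
      proof
        assume "i = 3"
        then obtain w where "w \<in> W" "G.Emv x 3 w \<noteq> (\<lambda>_. 0)" using supp_iff i by blast
        then show False using V3 unfolding G.Emv_def by auto
      qed
      moreover have "i \<noteq> 4"
      proof
        assume "i = 4"
        then obtain w where "w \<in> W" "G.Emv x 4 w \<noteq> (\<lambda>_. 0)" using supp_iff i by blast
        then show False using V4 unfolding G.Emv_def by auto
      qed
      moreover have "2 \<le> i" using ge2 i .
      ultimately show "i \<in> {2}" by auto
    qed
  qed
  have diam0: "module_diameter X Adj x W = 0"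
    unfolding module_diameter_def supp_def[symmetric] supp2 by simp
  have W2: "w y = 0" if "w \<in> W" "\<not> (y \<in> X \<and> gdist X Adj x y = 2)" for w y
  proof (cases "y \<in> X")
    case False then show ?thesis using G.Tmod_V[OF TM that(1)] by simp
  next
    case True
    then have "gdist X Adj x y \<noteq> 2" using that by simp
    moreover have "gdist X Adj x y \<le> 4" using G.diam[OF xX True] .
    ultimately have "gdist X Adj x y \<le> 1 \<or> gdist X Adj x y = 3 \<or> gdist X Adj x y = 4" by auto
    then show ?thesis using V01 V3 V4 that(1) True by blast
  qed
  obtain v ev where vW: "v \<in> W" and vnz: "v \<noteq> (\<lambda>_. 0)" and Av: "G.Amv v = (\<lambda>u. ev * v u)"
    using G.eigen_ex[OF TM w0W w0nz] by blast
  have Mv: "\<exists>a. mat_vec X M v = (\<lambda>y. a * v y)" if "M \<in> Talg X Adj x" for M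
    using that
  proof (induction rule: Talg.induct)
    case gen_A
    then show ?case using Av G.mv_A unfolding G.Amv_def by metis
  next
    case (gen_E i)
    have "mat_vec X (dual_idem X Adj x i) v = (\<lambda>y. (if i = 2 then 1 else 0) * v y)"
      unfolding G.mv_E using W2[OF vW] by (intro ext) auto
    then show ?case by blast
  next
    case (add M N)
    then obtain a1 a2 where "mat_vec X M v = (\<lambda>y. a1 * v y)" "mat_vec X N v = (\<lambda>y. a2 * v y)" by blast
    then have "mat_vec X (\<lambda>y z. M y z + N y z) v = (\<lambda>y. (a1 + a2) * v y)"
      unfolding mat_vec_def by (auto simp: sum.distrib algebra_simps fun_eq_iff)
    then show ?case by blast
  next
    case (smult M a)
    then obtain a1 where "mat_vec X M v = (\<lambda>y. a1 * v y)" by blast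
    then have "mat_vec X (\<lambda>y z. a * M y z) v = (\<lambda>y. (a * a1) * v y)"
      unfolding mat_vec_def by (auto simp: sum_distrib_left[symmetric] algebra_simps fun_eq_iff)
    then show ?case by blast
  next
    case (mult M N)
    then obtain a1 a2 where e: "mat_vec X M v = (\<lambda>y. a1 * v y)" "mat_vec X N v = (\<lambda>y. a2 * v y)" by blast
    have "mat_vec X (mat_mult X M N) v = (\<lambda>y. (a2 * a1) * v y)"
      unfolding mv_mult[OF G.finX] e(2) mv_lin e(1) by (simp add: algebra_simps)
    then show ?case by blast
  qed
  define U where "U = {f. \<exists>a. f = (\<lambda>y. a * v y)}"
  have UT: "T_module X Adj x U"
    unfolding T_module_def csubspace_of_def
  proof (intro conjI ballI allI)
    show "U \<subseteq> Vsp X"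
      unfolding U_def Vsp_def using G.Tmod_V[OF TM vW] by auto
    show "(\<lambda>_. 0) \<in> U" unfolding U_def by (rule CollectI, rule exI[of _ 0]) simp
    fix u assume "u \<in> U"
    then obtain a where ua: "u = (\<lambda>y. a * v y)" unfolding U_def by blast
    {
      fix u' assume "u' \<in> U"
      then obtain a' where "u' = (\<lambda>y. a' * v y)" unfolding U_def by blast
      then show "(\<lambda>y. u y + u' y) \<in> U" unfolding U_def ua by (auto simp: algebra_simps intro!: exI[of _ "a + a'"])
    }
    {
      fix c :: complex
      show "(\<lambda>y. c * u y) \<in> U" unfolding U_def ua by (auto intro!: exI[of _ "c * a"])
    }
    {
      fix M assume "M \<in> Talg X Adj x"
      then obtain a1 where "mat_vec X M v = (\<lambda>y. a1 * v y)" using Mv by blast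
      then show "mat_vec X M u \<in> U" unfolding U_def ua mv_lin by (auto intro!: exI[of _ "a * a1"])
    }
  qed
  have UW: "U \<subseteq> W" unfolding U_def using G.Tmod_smult[OF TM vW] by auto
  have Unz: "U \<noteq> {\<lambda>_. 0}"
  proof
    assume "U = {\<lambda>_. 0}"
    moreover have "v \<in> U" unfolding U_def by (auto intro!: exI[of _ 1])
    ultimately show False using vnz by simp
  qed
  have UeqW: "U = W" using irr[OF UT UW] Unz by simp
  have thin: "thin X Adj x W"
    unfolding thin_def dim_le_1_def
  proof
    fix i
    show "\<exists>v'. \<forall>w\<in>EW X Adj x i W. \<exists>a. w = (\<lambda>y. a * v' y)"
    proof (rule exI[of _ "mat_vec X (dual_idem X Adj x i) v"], intro ballI)
      fix w assume "w \<in> EW X Adj x i W"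
      then obtain u where "u \<in> U" "w = mat_vec X (dual_idem X Adj x i) u" unfolding EW_def UeqW by auto
      then obtain a where "w = mat_vec X (dual_idem X Adj x i) (\<lambda>y. a * v y)" unfolding U_def by auto
      then show "\<exists>a. w = (\<lambda>y. a * mat_vec X (dual_idem X Adj x i) v y)" unfolding mv_lin by blast
    qed
  qed
  show ?thesis using diam0 thin by simp
qed

end
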